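(* Let $d,h\ge1$, $1/2<\alpha\le1$, and let $\mathbf{x}:[0,1]\to\mathbb{R}^h$ satisfy $|\mathbf{x}(t)-\mathbf{x}(s)|\le C_\alpha|t-s|^\alpha$ for some $C_\alpha\in(0,\infty)$. Let $\mathbf{f}=[f_{ij}]:\mathbb{R}^d\to\mathbb{R}^{d\times h}$ with each $f_{ij}\in C^2(\mathbb{R}^d)$ and $\max\{|\mathbf{f}|,|\nabla\mathbf{f}|,|\nabla^2\mathbf{f}|\}<\infty$. Let $\mathbf{y}$ solve $\mathbf{y}(t)=\mathbf{y}_0+\int_0^t\mathbf{f}(\mathbf{y}(s))\,d\mathbf{x}(s)$ (Young integral), and for $n\ge0$ let $\mathbf{y}_n$ be the Euler scheme on $D_n=\{t^n_k=k/2^n:k=0,\dots,2^n\}$: $\mathbf{y}_n(t^n_0)=\mathbf{y}_0$, $\mathbf{y}_n(t^n_{k+1})=\mathbf{y}_n(t^n_k)+\mathbf{f}(\mathbf{y}_n(t^n_k))(\mathbf{x}(t^n_{k+1})-\mathbf{x}(t^n_k))$. Then $$H_\alpha(\mathbf{f}(\mathbf{y})-\mathbf{f}(\mathbf{y}_n)\mid D_n)\le\bigl(d|\nabla\mathbf{f}|+d^2|\nabla^2\mathbf{f}|(G_1^*+G_1)\bigr)H_\alpha(\mathbf{y}-\mathbf{y}_n\mid D_n)+d^2|\nabla^2\mathbf{f}|(G_1^*+G_1)\,|\mathbf{y}(0)-\mathbf{y}_n(0)|.$$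
   Context: For a vector or matrix, $|\cdot|$ denotes the maximum absolute value of its entries; $|\mathbf{f}|=\max_{ij}\sup|f_{ij}|$, $|\nabla\mathbf{f}|=\max_{ij}\sup|\nabla f_{ij}|$, $|\nabla^2\mathbf{f}|=\max_{ij}\sup|\nabla^2f_{ij}|$. Restricted Hölder norm: for a path $\mathbf{u}$ defined at least on $D_n$, $H_\alpha(\mathbf{u}\mid D_n)=\sup_{0\le i<j\le2^n}|\mathbf{u}(t^n_i)-\mathbf{u}(t^n_j)|/|t^n_i-t^n_j|^\alpha$. $K(2\alpha)=1+\sum_{n\ge1}n^{-2\alpha}$; $G_1^*=2h\lceil(2dhC_\alpha K(2\alpha)|\nabla\mathbf{f}|)^{1/\alpha}\rceil^{1-\alpha}|\mathbf{f}|C_\alpha$; $L=\frac{4}{1-2^{1-2\alpha}}(hC_\alpha)^2|\nabla\mathbf{f}||\mathbf{f}|$, $\omega=(h|\mathbf{f}|C_\alpha/L)^{1/\alpha}$, $G_1=(L+h|\mathbf{f}|C_\alpha)(1+\omega^{-1})$. *)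

theory Defs
  imports "HOL-Analysis.Analysis"
begin

definition vabs :: "real^'n::finite \<Rightarrow> real" where
  "vabs v = Max (range (\<lambda>i. \<bar>v $ i\<bar>))"

definition mabs :: "real^'h::finite^'d::finite \<Rightarrow> real" where
  "mabs M = Max (range (\<lambda>(i,j). \<bar>M $ i $ j\<bar>))"

definition grid :: "nat \<Rightarrow> nat \<Rightarrow> real" where
  "grid n k = real k / 2 ^ n"

text \<open>Restricted Hoelder seminorm H_alpha(u | D_n); u is given by its values at the
  grid points (u k = value at t^n_k), nm is the entrywise max-abs norm.\<close>
definition Hgrid :: "('a::ab_group_add \<Rightarrow> real) \<Rightarrow> nat \<Rightarrow> real \<Rightarrow> (nat \<Rightarrow> 'a) \<Rightarrow> real" where
  "Hgrid nm n \<alpha> u = Max {nm (u i - u j) / \<bar>grid n i - grid n j\<bar> powr \<alpha> | i j. i < j \<and> j \<le> 2 ^ n}"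

fun euler :: "(real^'d::finite \<Rightarrow> real^'h::finite^'d) \<Rightarrow> (real \<Rightarrow> real^'h) \<Rightarrow> real^'d \<Rightarrow> nat \<Rightarrow> nat \<Rightarrow> real^'d" where
  "euler f x y0 n 0 = y0"
| "euler f x y0 n (Suc k) = euler f x y0 n k + f (euler f x y0 n k) *v (x (grid n (Suc k)) - x (grid n k))"

definition young_has_integral ::
  "(real \<Rightarrow> real^'h::finite^'d::finite) \<Rightarrow> (real \<Rightarrow> real^'h) \<Rightarrow> real \<Rightarrow> real \<Rightarrow> real^'d \<Rightarrow> bool" where
  "young_has_integral g x a b I \<longleftrightarrow>
     (\<forall>e>0. \<exists>\<delta>>0. \<forall>(m::nat) (p::nat \<Rightarrow> real) (\<xi>::nat \<Rightarrow> real).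
        p 0 = a \<and> p m = b \<and>
        (\<forall>k<m. p k < p (Suc k) \<and> p (Suc k) - p k < \<delta> \<and> p k \<le> \<xi> k \<and> \<xi> k \<le> p (Suc k))
        \<longrightarrow> norm ((\<Sum>k<m. g (\<xi> k) *v (x (p (Suc k)) - x (p k))) - I) < e)"

definition supF :: "(real^'d::finite \<Rightarrow> real^'h::finite^'d) \<Rightarrow> real" where
  "supF f = Sup {\<bar>f z $ i $ j\<bar> | z i j. True}"

definition supDF :: "('d::finite \<Rightarrow> 'h::finite \<Rightarrow> real^'d \<Rightarrow> real^'d) \<Rightarrow> real" where
  "supDF Df = Sup {\<bar>Df i j z $ k\<bar> | i j z k. True}"

definition supD2F :: "('d::finite \<Rightarrow> 'h::finite \<Rightarrow> real^'d \<Rightarrow> real^'d^'d) \<Rightarrow> real" where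
  "supD2F D2f = Sup {\<bar>D2f i j z $ k $ l\<bar> | i j z k l. True}"

end

theory Submission
  imports Defs
begin
lemma fin_range: "finite (range (g :: 'a::finite \<Rightarrow> 'b))" by simp

lemma vabs_ge: "\<bar>v $ i\<bar> \<le> vabs v"
  unfolding vabs_def by (rule Max_ge) auto

lemma vabs_le: "(\<And>i. \<bar>v $ i\<bar> \<le> c) \<Longrightarrow> vabs v \<le> c"
  unfolding vabs_def by (subst Max_le_iff) auto

lemma vabs_nonneg: "0 \<le> vabs v"
  using vabs_ge[of v] abs_ge_zero order_trans by blast

lemma mabs_ge: "\<bar>M $ i $ j\<bar> \<le> mabs M"
  unfolding mabs_def by (rule Max_ge) auto

lemma mabs_le: "(\<And>i j. \<bar>M $ i $ j\<bar> \<le> c) \<Longrightarrow> mabs M \<le> c"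
  unfolding mabs_def by (subst Max_le_iff) auto

lemma mabs_nonneg: "0 \<le> mabs M"
  using mabs_ge[of M] abs_ge_zero order_trans by blast

lemma vabs_add: "vabs (a + b) \<le> vabs a + vabs b"
  by (rule vabs_le) (smt (verit) vabs_ge vector_add_component)

lemma vabs_uminus: "vabs (- a) = vabs a"
  unfolding vabs_def by simp

lemma vabs_commute: "vabs (a - b) = vabs (b - a)"
  by (metis minus_diff_eq vabs_uminus)

lemma vabs_diff: "vabs (a - b) \<le> vabs a + vabs b"
  by (rule vabs_le) (smt (verit) vabs_ge vector_minus_component)

lemma vabs_scaleR: "vabs (c *\<^sub>R v) \<le> \<bar>c\<bar> * vabs v"
  by (rule vabs_le) (simp add: abs_mult mult_left_mono vabs_ge)

lemma vabs_sum: "finite I \<Longrightarrow> vabs (\<Sum>i\<in>I. F i) \<le> (\<Sum>i\<in>I. vabs (F i))"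
proof (induction I rule: finite_induct)
  case (insert x I)
  then show ?case using vabs_add[of "F x" "sum F I"] by simp
qed (simp add: vabs_def)

lemma mabs_mult: "vabs (M *v w) \<le> real CARD('h) * mabs M * vabs (w :: real^'h::finite)"
proof (rule vabs_le)
  fix i
  have "\<bar>(M *v w) $ i\<bar> = \<bar>\<Sum>j\<in>UNIV. M $ i $ j * w $ j\<bar>"
    by (simp add: matrix_vector_mult_def)
  also have "\<dots> \<le> (\<Sum>j\<in>UNIV. \<bar>M $ i $ j * w $ j\<bar>)" by (rule sum_abs)
  also have "\<dots> \<le> (\<Sum>j\<in>(UNIV::'h set). mabs M * vabs w)"
    by (intro sum_mono) (simp add: abs_mult mult_mono' mabs_ge vabs_ge mabs_nonneg)
  also have "\<dots> = real CARD('h) * mabs M * vabs w" by simp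
  finally show "\<bar>(M *v w) $ i\<bar> \<le> real CARD('h) * mabs M * vabs w" .
qed


lemma inner_bound:
  fixes G w :: "real^'d::finite"
  assumes "\<And>k. \<bar>G $ k\<bar> \<le> B"
  shows "\<bar>G \<bullet> w\<bar> \<le> real CARD('d) * B * vabs w"
proof -
  have "\<bar>G \<bullet> w\<bar> = \<bar>\<Sum>k\<in>UNIV. G $ k * w $ k\<bar>" by (simp add: inner_vec_def)
  also have "\<dots> \<le> (\<Sum>k\<in>UNIV. \<bar>G $ k * w $ k\<bar>)" by (rule sum_abs)
  also have "\<dots> \<le> (\<Sum>k\<in>(UNIV::'d set). B * vabs w)"
    by (intro sum_mono) (simp add: abs_mult mult_mono' assms vabs_ge)
  also have "\<dots> = real CARD('d) * B * vabs w" by simp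
  finally show ?thesis .
qed

lemma line_deriv:
  fixes g :: "real^'d::finite \<Rightarrow> real"
  assumes "\<And>z. (g has_derivative (\<lambda>v. G z \<bullet> v)) (at z)"
  shows "((\<lambda>\<theta>. g (b + \<theta> *\<^sub>R w)) has_real_derivative (G (b + \<theta> *\<^sub>R w) \<bullet> w)) (at \<theta>)"
proof -
  have l: "((\<lambda>\<theta>. b + \<theta> *\<^sub>R w) has_derivative (\<lambda>t. t *\<^sub>R w)) (at \<theta>)"
    by (auto intro!: derivative_eq_intros)
  have "((\<lambda>\<theta>. g (b + \<theta> *\<^sub>R w)) has_derivative (\<lambda>t. G (b + \<theta> *\<^sub>R w) \<bullet> (t *\<^sub>R w))) (at \<theta>)"
    using has_derivative_compose[OF l assms] by simp
  moreover have "(\<lambda>t. G (b + \<theta> *\<^sub>R w) \<bullet> (t *\<^sub>R w)) = (*) (G (b + \<theta> *\<^sub>R w) \<bullet> w)"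
    by (auto simp: inner_scaleR_right)
  ultimately show ?thesis by (simp add: has_field_derivative_def)
qed

lemma lip_grad:
  fixes g :: "real^'d::finite \<Rightarrow> real"
  assumes "\<And>z. (g has_derivative (\<lambda>v. G z \<bullet> v)) (at z)" "\<And>z k. \<bar>G z $ k\<bar> \<le> B"
  shows "\<bar>g a - g b\<bar> \<le> real CARD('d) * B * vabs (a - b)"
proof -
  define w where "w = a - b"
  obtain z where z: "g (b + 1 *\<^sub>R w) - g (b + 0 *\<^sub>R w) = (1 - 0) * (G (b + z *\<^sub>R w) \<bullet> w)"
    using MVT2[of 0 1 "\<lambda>\<theta>. g (b + \<theta> *\<^sub>R w)" "\<lambda>\<theta>. G (b + \<theta> *\<^sub>R w) \<bullet> w"]
      line_deriv[OF assms(1)] by auto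
  have "g a - g b = G (b + z *\<^sub>R w) \<bullet> w" using z by (simp add: w_def)
  then show ?thesis using inner_bound[of "G (b + z *\<^sub>R w)" B w] assms(2) by (simp add: w_def)
qed

lemma vec_nth_deriv:
  assumes "(G has_derivative (\<lambda>v. Hs z *v v)) (at z)"
  shows "((\<lambda>w. G w $ k) has_derivative (\<lambda>v. (Hs z $ k) \<bullet> v)) (at z)"
proof -
  have "((\<lambda>w. G w $ k) has_derivative (\<lambda>v. (Hs z *v v) $ k)) (at z)"
    using bounded_linear.has_derivative[OF bounded_linear_vec_nth assms] by simp
  moreover have "(\<lambda>v. (Hs z *v v) $ k) = (\<lambda>v. (Hs z $ k) \<bullet> v)"
    by (auto simp: matrix_vector_mult_def inner_vec_def)
  ultimately show ?thesis by simp
qed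

lemma second_order:
  fixes F :: "real^'d::finite \<Rightarrow> real" and G :: "real^'d \<Rightarrow> real^'d" and Hs :: "real^'d \<Rightarrow> real^'d^'d"
  assumes dF: "\<And>z. (F has_derivative (\<lambda>v. G z \<bullet> v)) (at z)"
    and dG: "\<And>z. (G has_derivative (\<lambda>v. Hs z *v v)) (at z)"
    and B1: "\<And>z k. \<bar>G z $ k\<bar> \<le> B1" and B2: "\<And>z k l. \<bar>Hs z $ k $ l\<bar> \<le> B2"
    and M1: "vabs (c - e) \<le> M" and M2: "vabs (a - b) \<le> M"
  shows "\<bar>F a - F b - F c + F e\<bar> \<le> real CARD('d) * B1 * vabs ((a - c) - (b - e))
      + real CARD('d) * (real CARD('d) * B2 * M) * vabs (b - e)"
proof -
  define d where "d = real CARD('d)"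
  define \<phi> where "\<phi> = (\<lambda>\<theta>. F (c + \<theta> *\<^sub>R (a - c)) - F (e + \<theta> *\<^sub>R (b - e)))"
  define \<phi>' where "\<phi>' = (\<lambda>\<theta>. G (c + \<theta> *\<^sub>R (a - c)) \<bullet> (a - c) - G (e + \<theta> *\<^sub>R (b - e)) \<bullet> (b - e))"
  have der: "(\<phi> has_real_derivative \<phi>' \<theta>) (at \<theta>)" for \<theta>
    unfolding \<phi>_def \<phi>'_def
    by (intro DERIV_diff line_deriv[OF dF])
  obtain \<xi> where \<xi>: "0 < \<xi>" "\<xi> < 1" "\<phi> 1 - \<phi> 0 = (1 - 0) * \<phi>' \<xi>"
    using MVT2[of 0 1 \<phi> \<phi>'] der by auto
  have eq: "\<phi> 1 - \<phi> 0 = F a - F b - F c + F e" unfolding \<phi>_def by (simp add: algebra_simps)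
  define u where "u = c + \<xi> *\<^sub>R (a - c)"
  define v where "v = e + \<xi> *\<^sub>R (b - e)"
  have "\<phi>' \<xi> = G u \<bullet> ((a - c) - (b - e)) + (G u - G v) \<bullet> (b - e)"
    unfolding \<phi>'_def u_def v_def by (simp add: algebra_simps inner_diff_left inner_diff_right)
  have uv: "u - v = (1 - \<xi>) *\<^sub>R (c - e) + \<xi> *\<^sub>R (a - b)"
    unfolding u_def v_def by (simp add: algebra_simps)
  have "vabs (u - v) \<le> (1 - \<xi>) * M + \<xi> * M"
  proof -
    have "vabs (u - v) \<le> vabs ((1 - \<xi>) *\<^sub>R (c - e)) + vabs (\<xi> *\<^sub>R (a - b))"
      unfolding uv by (rule vabs_add)
    also have "\<dots> \<le> (1 - \<xi>) * M + \<xi> * M"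
      using vabs_scaleR[of "1 - \<xi>" "c - e"] vabs_scaleR[of \<xi> "a - b"] \<xi> M1 M2
      by (smt (verit) mult_left_mono)
    finally show ?thesis .
  qed
  then have uvM: "vabs (u - v) \<le> M" by (simp add: algebra_simps)
  have k: "\<bar>(G u - G v) $ k\<bar> \<le> d * B2 * M" for k
  proof -
    have "\<bar>G u $ k - G v $ k\<bar> \<le> d * B2 * vabs (u - v)"
      unfolding d_def by (rule lip_grad[of "\<lambda>w. G w $ k" "\<lambda>z. Hs z $ k"]) (auto intro: vec_nth_deriv[OF dG] B2)
    also have "\<dots> \<le> d * B2 * M"
      using uvM B2[of u k k] by (intro mult_left_mono) (auto simp: d_def)
    finally show ?thesis by simp
  qed
  have "\<bar>\<phi>' \<xi>\<bar> \<le> \<bar>G u \<bullet> ((a - c) - (b - e))\<bar> + \<bar>(G u - G v) \<bullet> (b - e)\<bar>"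
    using \<open>\<phi>' \<xi> = _\<close> by simp
  also have "\<dots> \<le> d * B1 * vabs ((a - c) - (b - e)) + d * (d * B2 * M) * vabs (b - e)"
    unfolding d_def by (intro add_mono inner_bound B1 k[unfolded d_def])
  finally show ?thesis using eq \<xi>(3) by (simp add: d_def)
qed


lemma pow_le_lin:
  fixes a \<alpha> :: real
  assumes "0 \<le> a" "0 < \<alpha>" "\<alpha> \<le> 1"
  shows "a powr \<alpha> \<le> \<alpha> * a + (1 - \<alpha>)"
proof (cases "a = 0")
  case True then show ?thesis using assms by simp
next
  case False
  then have "a powr \<alpha> * 1 powr (1 - \<alpha>) \<le> \<alpha> * a + (1 - \<alpha>) * 1"
    using assms by (intro Youngs_inequality_0) auto
  then show ?thesis by simp
qed

lemma powr_concave2: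
  fixes A B w \<alpha> :: real
  assumes "0 \<le> A" "0 \<le> B" "0 \<le> w" "w \<le> 1" "0 < \<alpha>" "\<alpha> \<le> 1"
  shows "(1 - w) * A powr \<alpha> + w * B powr \<alpha> \<le> ((1 - w) * A + w * B) powr \<alpha>"
proof -
  define M where "M = (1 - w) * A + w * B"
  have M0: "0 \<le> M" using assms by (simp add: M_def)
  show ?thesis
  proof (cases "M = 0")
    case True
    then have z1: "(1 - w) * A = 0" and z2: "w * B = 0" using assms unfolding M_def
      by (smt (verit) mult_nonneg_nonneg)+
    have e1: "(1 - w) * A powr \<alpha> = 0" using z1 by (cases "A = 0") auto
    have e2: "w * B powr \<alpha> = 0" using z2 by (cases "B = 0") auto
    show ?thesis using e1 e2 powr_ge_zero[of "(1 - w) * A + w * B" \<alpha>] by linarith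
  next
    case False
    then have Mp: "0 < M" using M0 by simp
    have a: "(A / M) powr \<alpha> \<le> \<alpha> * (A / M) + (1 - \<alpha>)"
      using assms Mp by (intro pow_le_lin) auto
    have b: "(B / M) powr \<alpha> \<le> \<alpha> * (B / M) + (1 - \<alpha>)"
      using assms Mp by (intro pow_le_lin) auto
    have "(1 - w) * (A / M) powr \<alpha> + w * (B / M) powr \<alpha>
        \<le> (1 - w) * (\<alpha> * (A / M) + (1 - \<alpha>)) + w * (\<alpha> * (B / M) + (1 - \<alpha>))"
      using a b assms by (intro add_mono mult_left_mono) auto
    also have "\<dots> = \<alpha> * (((1 - w) * A + w * B) / M) + (1 - \<alpha>)" using Mp by (simp add: field_simps)
    also have "\<dots> = 1" using Mp by (simp add: M_def[symmetric])
    finally have *: "(1 - w) * (A / M) powr \<alpha> + w * (B / M) powr \<alpha> \<le> 1" .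
    have "(1 - w) * A powr \<alpha> + w * B powr \<alpha>
        = M powr \<alpha> * ((1 - w) * (A / M) powr \<alpha> + w * (B / M) powr \<alpha>)"
      using Mp assms by (simp add: powr_divide field_simps)
    also have "\<dots> \<le> M powr \<alpha> * 1" using * by (intro mult_left_mono) auto
    finally show ?thesis by (simp add: M_def)
  qed
qed

lemma sum_split_add: "(\<Sum>i<a + (b::nat). f i) = (\<Sum>i<a. f i) + (\<Sum>i<b. f (a + i))"
  by (induction b) (auto simp: add.assoc)

lemma exists_le_avg:
  fixes D :: "nat \<Rightarrow> real"
  assumes "finite S" "S \<noteq> {}"
  shows "\<exists>k\<in>S. D k \<le> (\<Sum>j\<in>S. D j) / card S"
proof (rule ccontr)
  assume "\<not> ?thesis"
  then have "\<And>k. k \<in> S \<Longrightarrow> (\<Sum>j\<in>S. D j) / card S < D k" by auto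
  then have "(\<Sum>k\<in>S. (\<Sum>j\<in>S. D j) / card S) < (\<Sum>k\<in>S. D k)"
    using assms by (intro sum_strict_mono) auto
  then show False using assms by simp
qed

definition zs :: "real \<Rightarrow> nat \<Rightarrow> real" where
  "zs \<alpha> m = (\<Sum>j\<in>{1..m}. 1 / real j powr (2 * \<alpha>))"

lemma zs_nonneg: "0 \<le> zs \<alpha> m"
  unfolding zs_def by (intro sum_nonneg) auto

lemma zs_Suc: "zs \<alpha> (Suc m) = zs \<alpha> m + 1 / real (Suc m) powr (2 * \<alpha>)"
  unfolding zs_def by simp

lemma mono_upto:
  fixes p :: "nat \<Rightarrow> real"
  assumes "\<And>i. i < m \<Longrightarrow> p i < p (Suc i)" "i < k" "k \<le> m"
  shows "p i < p k"
  using assms(2,3)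
proof (induction k)
  case (Suc k)
  then show ?case using assms(1)[of k] by (cases "i = k") auto
qed simp


lemma vabs_zero[simp]: "vabs 0 = 0"
  unfolding vabs_def by simp

lemma prod_powr_bound:
  fixes a b q \<alpha> :: real
  assumes "0 \<le> a" "0 \<le> b" "a + b \<le> 2 * q" "0 < \<alpha>"
  shows "a powr \<alpha> * b powr \<alpha> \<le> q powr (2 * \<alpha>)"
proof -
  have q0: "0 \<le> q" using assms by simp
  have "a * b \<le> q * q"
  proof -
    have e: "(a + b) * (a + b) - 4 * (a * b) = (a - b) * (a - b)" by (simp add: algebra_simps)
    have "0 \<le> (a - b) * (a - b)" by simp
    then have "4 * (a * b) \<le> (a + b) * (a + b)" using e by linarith
    also have "\<dots> \<le> (2 * q) * (2 * q)" using assms by (intro mult_mono) auto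
    finally show ?thesis by simp
  qed
  then have "(a * b) powr \<alpha> \<le> (q * q) powr \<alpha>"
    using assms by (intro powr_mono2) auto
  moreover have "(a * b) powr \<alpha> = a powr \<alpha> * b powr \<alpha>" using assms by (simp add: powr_mult)
  moreover have "(q * q) powr \<alpha> = q powr (2 * \<alpha>)" using q0 by (simp only: powr_mult mult_2 powr_add)
  ultimately show ?thesis by simp
qed

lemma removal:
  fixes p :: "nat \<Rightarrow> real" and F :: "nat \<Rightarrow> real^'h::finite^'d::finite" and X :: "real \<Rightarrow> real^'h"
  assumes "\<And>i. i < m \<Longrightarrow> p i < p (Suc i)"
    and "\<And>i k. i < k \<Longrightarrow> k \<le> m \<Longrightarrow> vabs (X (p k) - X (p i)) \<le> C * (p k - p i) powr \<alpha>"
    and "\<And>i k. i < k \<Longrightarrow> k < m \<Longrightarrow> mabs (F k - F i) \<le> B * (p k - p i) powr \<alpha>"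
    and "0 \<le> B" "0 \<le> C" "0 < \<alpha>"
  shows "vabs ((\<Sum>i<m. F i *v (X (p (Suc i)) - X (p i))) - F 0 *v (X (p m) - X (p 0)))
     \<le> real CARD('h) * B * C * zs \<alpha> (m - 1) * (p m - p 0) powr (2 * \<alpha>)"
  using assms
proof (induction m arbitrary: p F)
  case 0
  then show ?case by (simp add: zs_nonneg)
next
  case (Suc M)
  note mono = Suc.prems(1) and Xh = Suc.prems(2) and Fh = Suc.prems(3)
  have Bn: "0 \<le> B" "0 \<le> C" "0 < \<alpha>" using Suc.prems by auto
  define h where "h = real CARD('h)"
  define r where "r = p (Suc M) - p 0"
  have RHSnn: "0 \<le> h * B * C * zs \<alpha> (Suc M - 1) * r powr (2 * \<alpha>)"
    using Bn by (simp add: h_def zs_nonneg)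
  show ?case
  proof (cases "M = 0")
    case True
    have "(\<Sum>i<Suc M. F i *v (X (p (Suc i)) - X (p i))) - F 0 *v (X (p (Suc M)) - X (p 0)) = 0"
      using True by simp
    then show ?thesis using RHSnn unfolding h_def r_def by (simp only: vabs_zero)
  next
    case False
    have pmono: "\<And>i k. i < k \<Longrightarrow> k \<le> Suc M \<Longrightarrow> p i < p k"
      using mono_upto[of "Suc M" p] mono by blast
    define D where "D k = p (Suc k) - p (k - 1)" for k
    have sumD: "(\<Sum>k\<in>{1..M}. D k) \<le> 2 * r"
    proof -
      have "(\<Sum>k\<in>{1..M}. D k) = (\<Sum>k\<in>{1..M}. p (Suc k) - p k) + (\<Sum>k\<in>{1..M}. p k - p (k - 1))"
        by (subst sum.distrib[symmetric]) (rule sum.cong, simp_all add: D_def)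
      also have "(\<Sum>k\<in>{1..M}. p (Suc k) - p k) = p (Suc M) - p 1"
        using False by (intro sum_Suc_diff) auto
      also have "(\<Sum>k\<in>{1..M}. p k - p (k - 1)) = (\<Sum>k\<in>{0..M - 1}. p (Suc k) - p k)"
      proof -
        have "(\<Sum>k\<in>{1..M}. p k - p (k - 1)) = (\<Sum>k\<in>Suc ` {0..M - 1}. p k - p (k - 1))"
          using False by (intro sum.cong) (auto simp: image_iff intro!: bexI[of _ "_ - 1"])
        also have "\<dots> = (\<Sum>k\<in>{0..M - 1}. p (Suc k) - p k)"
          by (subst sum.reindex) auto
        finally show ?thesis .
      qed
      also have "\<dots> = p M - p 0" using False by (subst sum_Suc_diff) auto
      finally have "(\<Sum>k\<in>{1..M}. D k) = p (Suc M) - p 1 + (p M - p 0)" .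
      moreover have "p 0 \<le> p 1" "p M \<le> p (Suc M)" using pmono[of 0 1] pmono[of M "Suc M"] False by auto
      ultimately show ?thesis unfolding r_def by (smt (verit))
    qed
    obtain k where k: "k \<in> {1..M}" "D k \<le> (\<Sum>j\<in>{1..M}. D j) / card {1..M}"
      using exists_le_avg[of "{1..M}" D] False by auto
    have Mpos: "0 < real M" using False by simp
    have Dk: "D k \<le> 2 * (r / M)"
    proof -
      have "(\<Sum>j\<in>{1..M}. D j) / card {1..M} \<le> 2 * r / M"
        using sumD Mpos by (simp add: divide_right_mono)
      then show ?thesis using k(2) by simp
    qed
    obtain j where j: "k = Suc j" using k by (cases k) auto
    obtain l where l: "M = Suc j + l" using le_Suc_ex[of k M] k j by auto
    define sk where "sk i = (if i < k then i else Suc i)" for i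
    define p' where "p' = p \<circ> sk"
    define F' where "F' = F \<circ> sk"
    have sk_mono: "i < i' \<Longrightarrow> sk i < sk i'" for i i' by (auto simp: sk_def)
    have sk_le: "sk i \<le> Suc i" for i by (auto simp: sk_def)
    have IH: "vabs ((\<Sum>i<M. F' i *v (X (p' (Suc i)) - X (p' i))) - F' 0 *v (X (p' M) - X (p' 0)))
       \<le> h * B * C * zs \<alpha> (M - 1) * (p' M - p' 0) powr (2 * \<alpha>)"
      unfolding h_def
    proof (rule Suc.IH)
      fix i assume "i < M"
      then show "p' i < p' (Suc i)" unfolding p'_def sk_def
        using pmono[of i "Suc (Suc i)"] pmono[of "Suc i" "Suc (Suc i)"] pmono[of i "Suc i"] by auto
    next
      fix i i' assume "i < i'" "i' \<le> M"
      then show "vabs (X (p' i') - X (p' i)) \<le> C * (p' i' - p' i) powr \<alpha>"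
        unfolding p'_def using Xh[of "sk i" "sk i'"] sk_mono[of i i'] sk_le[of i'] by simp
    next
      fix i i' assume "i < i'" "i' < M"
      then show "mabs (F' i' - F' i) \<le> B * (p' i' - p' i) powr \<alpha>"
        unfolding p'_def F'_def using Fh[of "sk i" "sk i'"] sk_mono[of i i'] sk_le[of i'] by simp
    qed (use Bn in auto)
    have p'0: "p' 0 = p 0" "F' 0 = F 0" using k by (auto simp: p'_def F'_def sk_def)
    have p'M: "p' M = p (Suc M)" using k by (auto simp: p'_def sk_def)
    define T where "T i = F i *v (X (p (Suc i)) - X (p i))" for i
    define E where "E = (F (Suc j) - F j) *v (X (p (Suc (Suc j))) - X (p (Suc j)))"
    define T' where "T' i = F' i *v (X (p' (Suc i)) - X (p' i))" for i
    have split: "(\<Sum>i<Suc M. T i) = (\<Sum>i<M. T' i) + E"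
    proof -
      have eqM: "Suc M = j + Suc (Suc l)" using l by simp
      have "(\<Sum>i<Suc M. T i) = (\<Sum>i<j. T i) + (\<Sum>i<Suc (Suc l). T (j + i))"
        unfolding eqM by (rule sum_split_add)
      also have "(\<Sum>i<Suc (Suc l). T (j + i)) = T (j + 0) + (T (j + Suc 0) + (\<Sum>i<l. T (j + Suc (Suc i))))"
        by (simp only: sum.lessThan_Suc_shift)
      finally have A: "(\<Sum>i<Suc M. T i) = (\<Sum>i<j. T i) + (T j + (T (Suc j) + (\<Sum>i<l. T (Suc (Suc (j + i))))))"
        by simp
      have eqM2: "M = j + Suc l" using l by simp
      have "(\<Sum>i<M. T' i) = (\<Sum>i<j. T' i) + (\<Sum>i<Suc l. T' (j + i))"
        unfolding eqM2 by (rule sum_split_add)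
      also have "(\<Sum>i<Suc l. T' (j + i)) = T' (j + 0) + (\<Sum>i<l. T' (j + Suc i))"
        by (simp only: sum.lessThan_Suc_shift)
      also have "(\<Sum>i<j. T' i) = (\<Sum>i<j. T i)"
        by (intro sum.cong) (auto simp: T'_def T_def p'_def F'_def sk_def j)
      also have "(\<Sum>i<l. T' (j + Suc i)) = (\<Sum>i<l. T (Suc (Suc (j + i))))"
        by (intro sum.cong) (auto simp: T'_def T_def p'_def F'_def sk_def j)
      also have "T' (j + 0) = F j *v (X (p (Suc (Suc j))) - X (p j))"
        by (simp add: T'_def p'_def F'_def sk_def j)
      finally have B: "(\<Sum>i<M. T' i) = (\<Sum>i<j. T i) + (F j *v (X (p (Suc (Suc j))) - X (p j)) + (\<Sum>i<l. T (Suc (Suc (j + i)))))" .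
      show ?thesis unfolding A B by (simp add: T_def E_def algebra_simps)
    qed
    have Ebound: "vabs E \<le> h * B * C * (r powr (2 * \<alpha>) / real M powr (2 * \<alpha>))"
    proof -
      have "vabs E \<le> h * mabs (F (Suc j) - F j) * vabs (X (p (Suc (Suc j))) - X (p (Suc j)))"
        unfolding E_def h_def by (rule mabs_mult)
      also have "\<dots> \<le> h * (B * (p (Suc j) - p j) powr \<alpha>) * (C * (p (Suc (Suc j)) - p (Suc j)) powr \<alpha>)"
        using Fh[of j "Suc j"] Xh[of "Suc j" "Suc (Suc j)"] l
        by (intro mult_mono mult_nonneg_nonneg mabs_nonneg vabs_nonneg) (auto simp: h_def Bn)
      also have "\<dots> = h * B * C * ((p (Suc j) - p j) powr \<alpha> * (p (Suc (Suc j)) - p (Suc j)) powr \<alpha>)"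
        by simp
      also have "\<dots> \<le> h * B * C * ((r / M) powr (2 * \<alpha>))"
        using Dk pmono[of j "Suc j"] pmono[of "Suc j" "Suc (Suc j)"] l Bn
        by (auto simp: D_def j h_def intro!: mult_left_mono prod_powr_bound)
      also have "(r / M) powr (2 * \<alpha>) = r powr (2 * \<alpha>) / real M powr (2 * \<alpha>)"
        using pmono[of 0 "Suc M"] by (auto simp: r_def intro!: powr_divide)
      finally show ?thesis .
    qed
    have zsM: "zs \<alpha> M = zs \<alpha> (M - 1) + 1 / real M powr (2 * \<alpha>)"
      using zs_Suc[of \<alpha> "M - 1"] False by simp
    have "vabs ((\<Sum>i<Suc M. T i) - F 0 *v (X (p (Suc M)) - X (p 0)))
        \<le> vabs ((\<Sum>i<M. F' i *v (X (p' (Suc i)) - X (p' i))) - F' 0 *v (X (p' M) - X (p' 0))) + vabs E"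
      unfolding split p'0 p'M T'_def
      using vabs_add[of "(\<Sum>i<M. F' i *v (X (p' (Suc i)) - X (p' i))) - F 0 *v (X (p (Suc M)) - X (p 0))" E]
      by (simp add: diff_add_eq)
    also have "\<dots> \<le> h * B * C * zs \<alpha> (M - 1) * r powr (2 * \<alpha>) + h * B * C * (r powr (2 * \<alpha>) / real M powr (2 * \<alpha>))"
      using IH Ebound unfolding p'0 p'M r_def by linarith
    also have "\<dots> = h * B * C * zs \<alpha> M * r powr (2 * \<alpha>)"
      unfolding zsM by (simp add: algebra_simps)
    finally show ?thesis by (simp add: T_def h_def r_def)
  qed
qed

definition kk :: "nat \<Rightarrow> real \<Rightarrow> nat" where "kk n t = nat \<lfloor>t * 2 ^ n\<rfloor>"

definition interp :: "nat \<Rightarrow> (nat \<Rightarrow> 'a::real_vector) \<Rightarrow> real \<Rightarrow> 'a" where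
  "interp n \<phi> t = \<phi> (kk n t) + (t * 2 ^ n - real (kk n t)) *\<^sub>R (\<phi> (Suc (kk n t)) - \<phi> (kk n t))"

lemma grid_mult: "grid n k * 2 ^ n = real k"
  by (simp add: grid_def)

lemma grid_le_iff: "grid n j \<le> grid n k \<longleftrightarrow> j \<le> k"
  by (simp add: grid_def divide_le_cancel)

lemma grid_less_iff: "grid n j < grid n k \<longleftrightarrow> j < k"
  by (simp add: grid_def divide_less_cancel)

lemma grid_nonneg: "0 \<le> grid n k" by (simp add: grid_def)

lemma grid_le1: "k \<le> 2 ^ n \<Longrightarrow> grid n k \<le> 1"
  by (simp add: grid_def)

lemma grid_top: "grid n (2 ^ n) = 1" by (simp add: grid_def)

lemma grid_Suc: "grid n (Suc k) = grid n k + 1 / 2 ^ n"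
  by (simp add: grid_def add_divide_distrib)

lemma grid_diff: "grid n k - grid n j = (real k - real j) / 2 ^ n"
  by (simp add: grid_def diff_divide_distrib)

lemma kk_grid: "kk n (grid n k) = k"
  by (simp add: kk_def grid_mult)

lemma kk_cell:
  assumes "0 \<le> t"
  shows "grid n (kk n t) \<le> t" "t < grid n (Suc (kk n t))"
proof -
  have f: "real (kk n t) = of_int \<lfloor>t * 2 ^ n\<rfloor>" using assms by (simp add: kk_def)
  have "of_int \<lfloor>t * 2 ^ n\<rfloor> \<le> t * 2 ^ n" "t * 2 ^ n < of_int \<lfloor>t * 2 ^ n\<rfloor> + 1"
    by linarith+
  then show "grid n (kk n t) \<le> t" "t < grid n (Suc (kk n t))"
    using f by (simp_all add: grid_def field_simps)
qed

lemma kk_less: "0 \<le> t \<Longrightarrow> t < 1 \<Longrightarrow> kk n t < 2 ^ n"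
  using kk_cell(1)[of t n] by (smt (verit) grid_le_iff grid_top linorder_not_le)

lemma interp_cell:
  assumes "grid n k \<le> t" "t \<le> grid n (Suc k)"
  shows "interp n \<phi> t = \<phi> k + (t * 2 ^ n - real k) *\<^sub>R (\<phi> (Suc k) - \<phi> k)"
proof -
  have a: "real k \<le> t * 2 ^ n" "t * 2 ^ n \<le> real k + 1"
    using assms by (simp_all add: grid_def field_simps)
  show ?thesis
  proof (cases "t * 2 ^ n < real k + 1")
    case True
    then have "\<lfloor>t * 2 ^ n\<rfloor> = int k" using a by (simp add: floor_eq_iff)
    then have "kk n t = k" by (simp add: kk_def)
    then show ?thesis by (simp add: interp_def)
  next
    case False
    then have e: "t * 2 ^ n = real k + 1" using a by simp
    then have "\<lfloor>t * 2 ^ n\<rfloor> = int (Suc k)" by simp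
    then have "kk n t = Suc k" by (simp add: kk_def)
    then show ?thesis using e by (simp add: interp_def)
  qed
qed

lemma interp_grid: "interp n \<phi> (grid n k) = \<phi> k"
  by (simp add: interp_def kk_grid grid_mult)

lemma vabs_mix:
  assumes "0 \<le> \<mu>" "\<mu> \<le> 1" "vabs P \<le> C * A powr \<alpha>" "vabs Q \<le> C * B powr \<alpha>"
    "0 \<le> A" "0 \<le> B" "0 < \<alpha>" "\<alpha> \<le> 1" "0 \<le> C"
  shows "vabs ((1 - \<mu>) *\<^sub>R P + \<mu> *\<^sub>R Q) \<le> C * ((1 - \<mu>) * A + \<mu> * B) powr \<alpha>"
proof -
  have "vabs ((1 - \<mu>) *\<^sub>R P + \<mu> *\<^sub>R Q) \<le> vabs ((1 - \<mu>) *\<^sub>R P) + vabs (\<mu> *\<^sub>R Q)"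
    by (rule vabs_add)
  also have "\<dots> \<le> (1 - \<mu>) * vabs P + \<mu> * vabs Q"
    using vabs_scaleR[of "1 - \<mu>" P] vabs_scaleR[of \<mu> Q] assms by simp
  also have "\<dots> \<le> (1 - \<mu>) * (C * A powr \<alpha>) + \<mu> * (C * B powr \<alpha>)"
    using assms by (intro add_mono mult_left_mono) auto
  also have "\<dots> = C * ((1 - \<mu>) * A powr \<alpha> + \<mu> * B powr \<alpha>)" by (simp add: algebra_simps)
  also have "\<dots> \<le> C * ((1 - \<mu>) * A + \<mu> * B) powr \<alpha>"
    using assms by (intro mult_left_mono powr_concave2) auto
  finally show ?thesis .
qed

lemma le_powr_self: "0 \<le> (s::real) \<Longrightarrow> s \<le> 1 \<Longrightarrow> \<alpha> \<le> 1 \<Longrightarrow> s \<le> s powr \<alpha>"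
  using powr_mono'[of \<alpha> 1 s] by (cases "s = 0") auto

locale eul =
  fixes x :: "real \<Rightarrow> real^'h::finite" and f :: "real^'d::finite \<Rightarrow> real^'h^'d" and y0 :: "real^'d"
    and n :: nat and \<alpha> C nf ndf K :: real and N :: nat
  assumes alpha: "1/2 < \<alpha>" "\<alpha> \<le> 1" and Cpos: "0 < C"
    and xh: "\<And>s t. s \<in> {0..1} \<Longrightarrow> t \<in> {0..1} \<Longrightarrow> vabs (x t - x s) \<le> C * \<bar>t - s\<bar> powr \<alpha>"
    and fb: "\<And>z i j. \<bar>f z $ i $ j\<bar> \<le> nf"
    and lip: "\<And>a b i j. \<bar>f a $ i $ j - f b $ i $ j\<bar> \<le> real CARD('d) * ndf * vabs (a - b)"
    and ndfpos: "0 < ndf"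
    and Kz: "\<And>m. 1 + zs \<alpha> m \<le> K"
    and NK: "2 * (real CARD('h) * real CARD('d) * ndf * C) * K \<le> real N powr \<alpha>"
    and N1: "1 \<le> N"
begin

abbreviation "e \<equiv> euler f x y0 n"
abbreviation "X \<equiv> interp n (\<lambda>k. x (grid n k))"
abbreviation "z \<equiv> interp n e"

lemma apos: "0 < \<alpha>" using alpha by simp

lemma nf_nonneg: "0 \<le> nf" using fb[of undefined undefined undefined] by linarith

lemma c2_nonneg: "0 \<le> (real CARD('h) * real CARD('d) * ndf * C)" using ndfpos Cpos by simp

lemma K_pos: "1 \<le> K" using Kz[of 0] by (simp add: zs_def)

lemma zs_K: "zs \<alpha> m \<le> K - 1" using Kz[of m] by simp

lemma key: assumes "0 \<le> r" "r \<le> 1 / real N" shows "2 * (real CARD('h) * real CARD('d) * ndf * C) * K * r powr \<alpha> \<le> 1"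
proof -
  have Npos: "0 < real N" using N1 by simp
  have "r powr \<alpha> \<le> (1 / real N) powr \<alpha>" using assms apos by (intro powr_mono2) auto
  also have "\<dots> = 1 / real N powr \<alpha>" using Npos by (simp add: powr_divide)
  finally have "2 * (real CARD('h) * real CARD('d) * ndf * C) * K * r powr \<alpha> \<le> 2 * (real CARD('h) * real CARD('d) * ndf * C) * K * (1 / real N powr \<alpha>)"
    using c2_nonneg K_pos by (intro mult_left_mono) auto
  also have "\<dots> \<le> 1" using NK Npos by (simp add: field_simps)
  finally show ?thesis .
qed

lemma fmat_bound: "mabs (f a) \<le> nf" by (rule mabs_le) (rule fb)

lemma flip: "mabs (f a - f b) \<le> real CARD('d) * ndf * vabs (a - b)"
  by (rule mabs_le) (use lip in simp)

lemma fv_bound: "vabs (f a *v w) \<le> real CARD('h) * nf * vabs w"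
  using mabs_mult[of "f a" w] fmat_bound[of a] vabs_nonneg[of w]
  by (smt (verit) mult_right_mono mult_left_mono of_nat_0_le_iff)

lemma x_grid: "j \<le> 2 ^ n \<Longrightarrow> k \<le> 2 ^ n \<Longrightarrow> vabs (x (grid n j) - x (grid n k)) \<le> C * \<bar>grid n j - grid n k\<bar> powr \<alpha>"
  by (rule xh) (auto simp: grid_nonneg grid_le1)

lemma e_step: "e (Suc k) - e k = f (e k) *v (x (grid n (Suc k)) - x (grid n k))"
  by simp

lemma z_cell:
  assumes "grid n k \<le> s" "s \<le> t" "t \<le> grid n (Suc k)"
  shows "z t - z s = f (e k) *v (X t - X s)"
proof -
  have zs': "z s = e k + (s * 2 ^ n - real k) *\<^sub>R (f (e k) *v (x (grid n (Suc k)) - x (grid n k)))"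
    using interp_cell[of n k s e] assms e_step[of k] by simp
  have zt: "z t = e k + (t * 2 ^ n - real k) *\<^sub>R (f (e k) *v (x (grid n (Suc k)) - x (grid n k)))"
    using interp_cell[of n k t e] assms e_step[of k] by simp
  have Xs: "X s = x (grid n k) + (s * 2 ^ n - real k) *\<^sub>R (x (grid n (Suc k)) - x (grid n k))"
    using interp_cell[of n k s] assms by simp
  have Xt: "X t = x (grid n k) + (t * 2 ^ n - real k) *\<^sub>R (x (grid n (Suc k)) - x (grid n k))"
    using interp_cell[of n k t] assms by simp
  show ?thesis unfolding zs' zt Xs Xt
    by (simp add: matrix_vector_mult_scaleR matrix_vector_mult_diff_distrib scaleR_diff_left)
qed

end

context eul begin

lemma X_grid: "X (grid n k) = x (grid n k)" by (rule interp_grid)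

lemma Xh_gp:
  assumes "k \<le> 2 ^ n" "grid n k \<le> v" "v \<le> 1"
  shows "vabs (X v - x (grid n k)) \<le> C * (v - grid n k) powr \<alpha>"
proof (cases "v = 1")
  case True
  then have "X v = x (grid n (2 ^ n))" using X_grid[of "2 ^ n"] by (simp add: grid_top)
  then show ?thesis using x_grid[of "2 ^ n" k] assms True by (simp add: grid_top)
next
  case False
  have v0: "0 \<le> v" using assms grid_nonneg order_trans by blast
  define b where "b = kk n v"
  have b: "grid n b \<le> v" "v < grid n (Suc b)" using kk_cell[OF v0] by (auto simp: b_def)
  have bl: "b < 2 ^ n" using kk_less[OF v0] False assms by (simp add: b_def)
  have "grid n k < grid n (Suc b)" using assms(2) b(2) by linarith
  then have kb: "k \<le> b" by (simp add: grid_less_iff)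
  define \<mu> where "\<mu> = v * 2 ^ n - real b"
  have \<mu>: "0 \<le> \<mu>" "\<mu> \<le> 1" using b by (simp_all add: \<mu>_def grid_def field_simps)
  have Xv: "X v = x (grid n b) + \<mu> *\<^sub>R (x (grid n (Suc b)) - x (grid n b))"
    using interp_cell[of n b v] b by (simp add: \<mu>_def)
  have eq: "X v - x (grid n k) = (1 - \<mu>) *\<^sub>R (x (grid n b) - x (grid n k)) + \<mu> *\<^sub>R (x (grid n (Suc b)) - x (grid n k))"
    unfolding Xv by (simp add: algebra_simps)
  have "vabs (X v - x (grid n k)) \<le> C * ((1 - \<mu>) * (grid n b - grid n k) + \<mu> * (grid n (Suc b) - grid n k)) powr \<alpha>"
    unfolding eq
  proof (rule vabs_mix)
    show "vabs (x (grid n b) - x (grid n k)) \<le> C * (grid n b - grid n k) powr \<alpha>"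
      using x_grid[of b k] bl assms kb by (simp add: grid_le_iff)
    show "vabs (x (grid n (Suc b)) - x (grid n k)) \<le> C * (grid n (Suc b) - grid n k) powr \<alpha>"
      using x_grid[of "Suc b" k] bl assms kb by (simp add: grid_le_iff)
  qed (use \<mu> alpha Cpos kb grid_le_iff in auto)
  also have "(1 - \<mu>) * (grid n b - grid n k) + \<mu> * (grid n (Suc b) - grid n k) = v - grid n k"
    by (simp add: \<mu>_def grid_Suc grid_def field_simps)
  finally show ?thesis .
qed

lemma Xh:
  assumes "0 \<le> u" "u \<le> v" "v \<le> 1"
  shows "vabs (X v - X u) \<le> C * (v - u) powr \<alpha>"
proof (cases "u = v")
  case True then show ?thesis using Cpos by simp
next
  case False
  then have uv: "u < v" using assms by simp
  define a where "a = kk n u"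
  have a: "grid n a \<le> u" "u < grid n (Suc a)" using kk_cell[OF assms(1)] by (auto simp: a_def)
  have al: "a < 2 ^ n" using kk_less[OF assms(1)] uv assms by (simp add: a_def)
  define lam where "lam = u * 2 ^ n - real a"
  have lam: "0 \<le> lam" "lam \<le> 1" using a by (simp_all add: lam_def grid_def field_simps)
  have Xu: "X u = x (grid n a) + lam *\<^sub>R (x (grid n (Suc a)) - x (grid n a))"
    using interp_cell[of n a u] a by (simp add: lam_def)
  show ?thesis
  proof (cases "v \<le> grid n (Suc a)")
    case True
    have Xv: "X v = x (grid n a) + (v * 2 ^ n - real a) *\<^sub>R (x (grid n (Suc a)) - x (grid n a))"
      using interp_cell[of n a v] a True uv by simp
    define s where "s = (v - u) * 2 ^ n"
    have eq: "X v - X u = s *\<^sub>R (x (grid n (Suc a)) - x (grid n a))"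
      unfolding Xv Xu s_def lam_def by (simp add: algebra_simps)
    have s: "0 \<le> s" "s \<le> 1" using uv a True by (simp_all add: s_def grid_def field_simps)
    have "vabs (X v - X u) \<le> s * (C * (1 / 2 ^ n) powr \<alpha>)"
    proof -
      have A: "vabs (X v - X u) \<le> \<bar>s\<bar> * vabs (x (grid n (Suc a)) - x (grid n a))"
        unfolding eq by (rule vabs_scaleR)
      have B: "vabs (x (grid n (Suc a)) - x (grid n a)) \<le> C * (1 / 2 ^ n) powr \<alpha>"
        using x_grid[of "Suc a" a] al by (simp add: grid_Suc)
      have "\<bar>s\<bar> * vabs (x (grid n (Suc a)) - x (grid n a)) \<le> s * (C * (1 / 2 ^ n) powr \<alpha>)"
        using B s by (simp add: mult_left_mono)
      then show ?thesis using A by linarith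
    qed
    also have "\<dots> \<le> s powr \<alpha> * (C * (1 / 2 ^ n) powr \<alpha>)"
      using s alpha Cpos by (intro mult_right_mono le_powr_self) auto
    also have "\<dots> = C * (s * (1 / 2 ^ n)) powr \<alpha>"
      using s powr_mult[of s "1 / 2 ^ n" \<alpha>] by simp
    also have "s * (1 / 2 ^ n) = v - u" by (simp add: s_def)
    finally show ?thesis .
  next
    case False
    have eq: "X v - X u = (1 - lam) *\<^sub>R (X v - x (grid n a)) + lam *\<^sub>R (X v - x (grid n (Suc a)))"
      unfolding Xu by (simp add: algebra_simps)
    have "vabs (X v - X u) \<le> C * ((1 - lam) * (v - grid n a) + lam * (v - grid n (Suc a))) powr \<alpha>"
      unfolding eq
      by (rule vabs_mix) (use lam alpha Cpos False a uv assms al in \<open>auto intro!: Xh_gp\<close>)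
    also have "(1 - lam) * (v - grid n a) + lam * (v - grid n (Suc a)) = v - u"
      by (simp add: lam_def grid_Suc grid_def field_simps)
    finally show ?thesis .
  qed
qed

end

context eul begin

lemma powr2: "0 \<le> r \<Longrightarrow> r powr (2 * \<alpha>) = r powr \<alpha> * r powr \<alpha>"
  by (simp only: mult_2 powr_add)

lemma err_small:
  assumes "0 \<le> r" "r \<le> 1 / real N"
  shows "2 * (real CARD('h) * real CARD('d) * ndf * C) * zs \<alpha> m * r powr \<alpha> \<le> 1"
proof -
  have "2 * (real CARD('h) * real CARD('d) * ndf * C) * zs \<alpha> m * r powr \<alpha>
      \<le> 2 * (real CARD('h) * real CARD('d) * ndf * C) * K * r powr \<alpha>"
    using zs_K[of m] c2_nonneg by (intro mult_right_mono mult_left_mono) auto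
  also have "\<dots> \<le> 1" by (rule key[OF assms])
  finally show ?thesis .
qed

lemma grid_local:
  assumes "a < b" "b \<le> 2 ^ n" "grid n b - grid n a \<le> 1 / real N"
  shows "vabs (e b - e a) \<le> 2 * real CARD('h) * nf * C * (grid n b - grid n a) powr \<alpha>"
  using assms
proof (induction "b - a" arbitrary: a b rule: less_induct)
  case less
  define m where "m = b - a"
  define r where "r = grid n b - grid n a"
  define B where "B = real CARD('d) * ndf * (2 * real CARD('h) * nf * C)"
  have bm: "b = a + m" using less.prems by (simp add: m_def)
  have r0: "0 \<le> r" using less.prems by (simp add: r_def grid_le_iff)
  have B0: "0 \<le> B" using ndfpos nf_nonneg Cpos by (simp add: B_def)
  have rem: "vabs ((\<Sum>i<m. f (e (a + i)) *v (x (grid n (a + Suc i)) - x (grid n (a + i))))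
      - f (e (a + 0)) *v (x (grid n (a + m)) - x (grid n (a + 0))))
     \<le> real CARD('h) * B * C * zs \<alpha> (m - 1) * (grid n (a + m) - grid n (a + 0)) powr (2 * \<alpha>)"
  proof (rule removal[where p="\<lambda>i. grid n (a + i)" and F="\<lambda>i. f (e (a + i))" and X=x])
    fix i assume "i < m"
    show "grid n (a + i) < grid n (a + Suc i)" by (simp add: grid_less_iff)
  next
    fix i k assume ik: "i < k" "k \<le> m"
    then have "vabs (x (grid n (a + k)) - x (grid n (a + i))) \<le> C * \<bar>grid n (a + k) - grid n (a + i)\<bar> powr \<alpha>"
      using less.prems by (intro x_grid) (auto simp: m_def)
    then show "vabs (x (grid n (a + k)) - x (grid n (a + i))) \<le> C * (grid n (a + k) - grid n (a + i)) powr \<alpha>"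
      using ik by (simp add: grid_le_iff)
  next
    fix i k assume ik: "i < k" "k < m"
    have "mabs (f (e (a + k)) - f (e (a + i))) \<le> real CARD('d) * ndf * vabs (e (a + k) - e (a + i))"
      by (rule flip)
    also have "vabs (e (a + k) - e (a + i)) \<le> 2 * real CARD('h) * nf * C * (grid n (a + k) - grid n (a + i)) powr \<alpha>"
    proof (rule less.hyps)
      show "a + k - (a + i) < b - a" using ik by (simp add: m_def)
      show "a + i < a + k" using ik by simp
      show "a + k \<le> 2 ^ n" using ik less.prems by (simp add: m_def)
      have "grid n (a + k) \<le> grid n b" "grid n a \<le> grid n (a + i)" using ik by (auto simp: grid_le_iff m_def)
      then show "grid n (a + k) - grid n (a + i) \<le> 1 / real N" using less.prems by linarith
    qed
    finally show "mabs (f (e (a + k)) - f (e (a + i))) \<le> B * (grid n (a + k) - grid n (a + i)) powr \<alpha>"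
      using ndfpos by (simp add: B_def mult_left_mono algebra_simps)
  qed (use B0 Cpos apos in auto)
  have tel: "(\<Sum>i<m. f (e (a + i)) *v (x (grid n (a + Suc i)) - x (grid n (a + i)))) = e b - e a"
  proof -
    have "(\<Sum>i<m. f (e (a + i)) *v (x (grid n (a + Suc i)) - x (grid n (a + i)))) = (\<Sum>i<m. e (a + Suc i) - e (a + i))"
      by simp
    also have "\<dots> = e (a + m) - e (a + 0)" by (rule sum_lessThan_telescope)
    finally show ?thesis by (simp add: bm)
  qed
  have first: "vabs (f (e a) *v (x (grid n b) - x (grid n a))) \<le> real CARD('h) * nf * (C * r powr \<alpha>)"
  proof -
    have "vabs (x (grid n b) - x (grid n a)) \<le> C * \<bar>grid n b - grid n a\<bar> powr \<alpha>"
      using less.prems by (intro x_grid) auto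
    then have "vabs (x (grid n b) - x (grid n a)) \<le> C * r powr \<alpha>" using r0 by (simp add: r_def)
    then show ?thesis using fv_bound[of "e a" "x (grid n b) - x (grid n a)"] nf_nonneg
      by (smt (verit) mult_left_mono of_nat_0_le_iff mult_nonneg_nonneg)
  qed
  have "vabs (e b - e a) \<le> vabs (f (e a) *v (x (grid n b) - x (grid n a)))
      + vabs ((e b - e a) - f (e a) *v (x (grid n b) - x (grid n a)))"
    using vabs_add[of "f (e a) *v (x (grid n b) - x (grid n a))" "(e b - e a) - f (e a) *v (x (grid n b) - x (grid n a))"]
    by simp
  also have "\<dots> \<le> real CARD('h) * nf * (C * r powr \<alpha>) + real CARD('h) * B * C * zs \<alpha> (m - 1) * r powr (2 * \<alpha>)"
    using first rem unfolding tel by (simp add: bm r_def)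
  also have "real CARD('h) * B * C * zs \<alpha> (m - 1) * r powr (2 * \<alpha>)
      = (2 * (real CARD('h) * real CARD('d) * ndf * C) * zs \<alpha> (m - 1) * r powr \<alpha>) * (real CARD('h) * nf * C * r powr \<alpha>)"
    unfolding powr2[OF r0] by (simp add: B_def algebra_simps)
  also have "\<dots> \<le> 1 * (real CARD('h) * nf * C * r powr \<alpha>)"
    using err_small[of r "m - 1"] r0 less.prems nf_nonneg Cpos
    by (intro mult_right_mono) (auto simp: r_def)
  finally show ?case by (simp add: r_def algebra_simps)
qed

end

lemma cell_above:
  assumes "0 < v" "v \<le> 1"
  obtains b where "grid n b < v" "v \<le> grid n (Suc b)" "b < 2 ^ n"
proof -
  define c where "c = \<lceil>v * 2 ^ n\<rceil>"
  have c: "of_int c - 1 < v * 2 ^ n" "v * 2 ^ n \<le> of_int c"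
    using ceiling_correct[of "v * 2 ^ n"] by (auto simp: c_def)
  have "0 < v * 2 ^ n" using assms by simp
  then have "(0::real) < of_int c" using c by linarith
  then have c1: "1 \<le> c" by simp
  have c2: "c \<le> 2 ^ n" unfolding c_def using assms by (simp add: ceiling_le_iff)
  define b where "b = nat (c - 1)"
  have rb: "real b = of_int c - 1" using c1 by (simp add: b_def)
  show ?thesis
  proof
    show "grid n b < v" using c rb by (simp add: grid_def field_simps)
    show "v \<le> grid n (Suc b)" using c rb by (simp add: grid_def field_simps)
    show "b < 2 ^ n" using c1 c2 by (simp add: b_def nat_less_iff)
  qed
qed

context eul begin

lemma X_lin:
  assumes "grid n k \<le> s" "s \<le> t" "t \<le> grid n (Suc k)" "Suc k \<le> 2 ^ n"
  shows "vabs (X t - X s) \<le> (t - s) * 2 ^ n * (C * (1 / 2 ^ n) powr \<alpha>)"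
proof -
  have Xs: "X s = x (grid n k) + (s * 2 ^ n - real k) *\<^sub>R (x (grid n (Suc k)) - x (grid n k))"
    using interp_cell[of n k s] assms by simp
  have Xt: "X t = x (grid n k) + (t * 2 ^ n - real k) *\<^sub>R (x (grid n (Suc k)) - x (grid n k))"
    using interp_cell[of n k t] assms by simp
  have eq: "X t - X s = ((t - s) * 2 ^ n) *\<^sub>R (x (grid n (Suc k)) - x (grid n k))"
    unfolding Xs Xt by (simp add: algebra_simps)
  have A: "vabs (X t - X s) \<le> \<bar>(t - s) * 2 ^ n\<bar> * vabs (x (grid n (Suc k)) - x (grid n k))"
    unfolding eq by (rule vabs_scaleR)
  have B: "vabs (x (grid n (Suc k)) - x (grid n k)) \<le> C * (1 / 2 ^ n) powr \<alpha>"
    using x_grid[of "Suc k" k] assms by (simp add: grid_Suc)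
  have "\<bar>(t - s) * 2 ^ n\<bar> * vabs (x (grid n (Suc k)) - x (grid n k)) \<le> (t - s) * 2 ^ n * (C * (1 / 2 ^ n) powr \<alpha>)"
    using B assms by (simp add: mult_left_mono)
  then show ?thesis using A by linarith
qed

lemma gen_local:
  assumes "0 \<le> u" "u < v" "v \<le> 1" "v - u \<le> 1 / real N"
  shows "vabs (z v - z u) \<le> 2 * real CARD('h) * nf * C * (v - u) powr \<alpha>"
proof -
  define r where "r = v - u"
  define Q where "Q = real CARD('h) * nf * C * r powr \<alpha>"
  have r0: "0 \<le> r" using assms by (simp add: r_def)
  have Q0: "0 \<le> Q" using nf_nonneg Cpos by (simp add: Q_def)
  define a where "a = kk n u"
  have a: "grid n a \<le> u" "u < grid n (Suc a)" using kk_cell[OF assms(1)] by (auto simp: a_def)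
  have al: "a < 2 ^ n" using kk_less[OF assms(1)] assms by (simp add: a_def)
  define t1 where "t1 = grid n (Suc a)"
  have FX: "vabs (f w *v (X v - X u)) \<le> Q" for w
  proof -
    have "vabs (f w *v (X v - X u)) \<le> real CARD('h) * nf * vabs (X v - X u)" by (rule fv_bound)
    also have "\<dots> \<le> real CARD('h) * nf * (C * (v - u) powr \<alpha>)"
      using Xh[of u v] assms nf_nonneg by (intro mult_left_mono) auto
    finally show ?thesis by (simp add: Q_def r_def)
  qed
  have "vabs (z v - z u) \<le> Q + 1 * Q"
  proof (cases "v \<le> t1")
    case True
    have "z v - z u = f (e a) *v (X v - X u)" using z_cell[of a u v] a True assms by (simp add: t1_def)
    then show ?thesis using FX[of "e a"] Q0 by simp
  next
    case False
    note vt1 = False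
    show ?thesis
    proof (cases "r < 1 / 2 ^ n")
      case True
      have v2: "v \<le> grid n (Suc (Suc a))" using True a vt1 by (simp add: r_def grid_Suc t1_def)
      have sa: "Suc (Suc a) \<le> 2 ^ n"
      proof -
        have "grid n (Suc a) < grid n (2 ^ n)" using vt1 assms by (simp add: grid_top t1_def)
        then show ?thesis by (simp add: grid_less_iff)
      qed
      have A: "z v - z t1 = f (e (Suc a)) *v (X v - X t1)"
        using z_cell[of "Suc a" t1 v] a vt1 v2 by (simp add: t1_def del: euler.simps)
      have B: "z t1 - z u = f (e a) *v (X t1 - X u)"
        using z_cell[of a u t1] a by (simp add: t1_def del: euler.simps)
      have "z v - z u = (z v - z t1) + (z t1 - z u)" by simp
      then have eq: "z v - z u = f (e (Suc a)) *v (X v - X t1) + f (e a) *v (X t1 - X u)"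
        unfolding A B .
      have "vabs (z v - z u) \<le> real CARD('h) * nf * vabs (X v - X t1) + real CARD('h) * nf * vabs (X t1 - X u)"
        unfolding eq using vabs_add[of "f (e (Suc a)) *v (X v - X t1)" "f (e a) *v (X t1 - X u)"]
          fv_bound[of "e (Suc a)" "X v - X t1"] fv_bound[of "e a" "X t1 - X u"] by linarith
      also have "\<dots> \<le> real CARD('h) * nf * ((v - t1) * 2 ^ n * (C * (1 / 2 ^ n) powr \<alpha>))
          + real CARD('h) * nf * ((t1 - u) * 2 ^ n * (C * (1 / 2 ^ n) powr \<alpha>))"
        using X_lin[of "Suc a" t1 v] X_lin[of a u t1] a vt1 v2 sa nf_nonneg
        by (intro add_mono mult_left_mono) (auto simp: t1_def)
      also have "\<dots> = real CARD('h) * nf * C * ((r * 2 ^ n) * (1 / 2 ^ n) powr \<alpha>)"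
        by (simp add: r_def algebra_simps)
      also have "\<dots> \<le> real CARD('h) * nf * C * ((r * 2 ^ n) powr \<alpha> * (1 / 2 ^ n) powr \<alpha>)"
        using True r0 nf_nonneg Cpos alpha
        by (intro mult_left_mono mult_right_mono le_powr_self) (auto simp: field_simps)
      also have "(r * 2 ^ n) powr \<alpha> * (1 / 2 ^ n) powr \<alpha> = r powr \<alpha>"
        using r0 powr_mult[of "r * 2 ^ n" "1 / 2 ^ n" \<alpha>] by simp
      finally have "vabs (z v - z u) \<le> Q" by (simp add: Q_def)
      then show ?thesis using Q0 by simp
    next
      case False
      have g_r: "1 / 2 ^ n \<le> r" using False by simp
      have v0: "0 < v" using assms by simp
      obtain b where b: "grid n b < v" "v \<le> grid n (Suc b)" "b < 2 ^ n"
        using cell_above[OF v0 assms(3)] by blast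
      have ab: "Suc a \<le> b"
      proof -
        have "grid n (Suc a) < grid n (Suc b)" using vt1 b by (simp add: t1_def)
        then show ?thesis by (simp add: grid_less_iff)
      qed
      define m where "m = b - a"
      have m1: "1 \<le> m" using ab by (simp add: m_def)
      define p where "p i = (if i < m then grid n (Suc a + i) else v)" for i
      define F where "F i = f (e (Suc a + i))" for i
      define B where "B = real CARD('d) * ndf * (2 * real CARD('h) * nf * C)"
      have B0: "0 \<le> B" using ndfpos nf_nonneg Cpos by (simp add: B_def)
      have pm: "p m = v" "p 0 = t1" using m1 by (auto simp: p_def t1_def)
      have pin: "0 \<le> p i \<and> p i \<le> 1" for i
        using assms b grid_nonneg[of n] grid_le1[of "Suc a + i" n] by (auto simp: p_def m_def)
      have pge: "t1 \<le> p i" for i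
        using vt1 by (auto simp: p_def t1_def grid_le_iff)
      have ple: "p i \<le> v" if "i \<le> m" for i
      proof (cases "i < m")
        case True
        then have "grid n (Suc a + i) \<le> grid n b" by (simp add: grid_le_iff m_def)
        then show ?thesis using True b by (simp add: p_def)
      qed (use that in \<open>simp add: p_def\<close>)
      have rem: "vabs ((\<Sum>i<m. F i *v (X (p (Suc i)) - X (p i))) - F 0 *v (X (p m) - X (p 0)))
          \<le> real CARD('h) * B * C * zs \<alpha> (m - 1) * (p m - p 0) powr (2 * \<alpha>)"
      proof (rule removal)
        fix i assume i: "i < m"
        show "p i < p (Suc i)"
        proof (cases "Suc i < m")
          case True then show ?thesis using i by (simp add: p_def grid_less_iff)
        next
          case False
          then have "Suc a + i = b" using i by (simp add: m_def)
          then show ?thesis using i False b by (simp add: p_def)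
        qed
      next
        fix i k assume ik: "i < k" "k \<le> m"
        have "p i \<le> p k"
        proof (cases "k < m")
          case True then show ?thesis using ik by (simp add: p_def grid_le_iff)
        next
          case False then show ?thesis using ple[of i] ik pm by simp
        qed
        then show "vabs (X (p k) - X (p i)) \<le> C * (p k - p i) powr \<alpha>"
          using pin[of i] pin[of k] by (intro Xh) auto
      next
        fix i k assume ik: "i < k" "k < m"
        have "mabs (F k - F i) \<le> real CARD('d) * ndf * vabs (e (Suc a + k) - e (Suc a + i))"
          unfolding F_def by (rule flip)
        also have "vabs (e (Suc a + k) - e (Suc a + i)) \<le> 2 * real CARD('h) * nf * C * (grid n (Suc a + k) - grid n (Suc a + i)) powr \<alpha>"
        proof (rule grid_local)
          show "Suc a + i < Suc a + k" using ik by simp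
          show "Suc a + k \<le> 2 ^ n" using ik b by (simp add: m_def)
          have "grid n (Suc a + k) \<le> v" "t1 \<le> grid n (Suc a + i)"
            using ple[of k] pge[of i] ik by (auto simp: p_def)
          then show "grid n (Suc a + k) - grid n (Suc a + i) \<le> 1 / real N"
            using assms a unfolding t1_def by linarith
        qed
        finally show "mabs (F k - F i) \<le> B * (p k - p i) powr \<alpha>"
          using ndfpos ik by (simp add: B_def p_def mult_left_mono algebra_simps)
      qed (use B0 Cpos apos in auto)
      have tel: "(\<Sum>i<m. F i *v (X (p (Suc i)) - X (p i))) = z v - z t1"
      proof -
        have "(\<Sum>i<m. F i *v (X (p (Suc i)) - X (p i))) = (\<Sum>i<m. z (p (Suc i)) - z (p i))"
        proof (rule sum.cong)
          fix i assume "i \<in> {..<m}"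
          then have i: "i < m" by simp
          have "p i = grid n (Suc a + i)" using i by (simp add: p_def)
          moreover have "p (Suc i) \<le> grid n (Suc (Suc a + i))"
          proof (cases "Suc i < m")
            case True then show ?thesis by (simp add: p_def)
          next
            case False
            then have "Suc a + i = b" using i by (simp add: m_def)
            then show ?thesis using False b by (simp add: p_def)
          qed
          moreover have "p i \<le> p (Suc i)"
          proof (cases "Suc i < m")
            case True then show ?thesis by (simp add: p_def grid_le_iff)
          next
            case False
            then show ?thesis using ple[of i] i pm by (simp add: p_def)
          qed
          ultimately show "F i *v (X (p (Suc i)) - X (p i)) = z (p (Suc i)) - z (p i)"
            unfolding F_def using z_cell[of "Suc a + i" "p i" "p (Suc i)"] by simp
        qed simp
        also have "\<dots> = z (p m) - z (p 0)" by (rule sum_lessThan_telescope)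
        finally show ?thesis using pm by simp
      qed
      define F1 where "F1 = f (e (Suc a))"
      define F0 where "F0 = f (e a)"
      have zt1u: "z t1 - z u = F0 *v (X t1 - X u)"
        using z_cell[of a u t1] a by (simp add: t1_def F0_def)
      have dec: "z v - z u = ((z v - z t1) - F1 *v (X v - X t1)) + F1 *v (X v - X u) + (F0 - F1) *v (X t1 - X u)"
        using zt1u by (simp add: algebra_simps)
      have E1: "vabs ((z v - z t1) - F1 *v (X v - X t1)) \<le> 2 * (real CARD('h) * real CARD('d) * ndf * C) * zs \<alpha> (m - 1) * r powr \<alpha> * Q"
      proof -
        have "vabs ((z v - z t1) - F1 *v (X v - X t1)) \<le> real CARD('h) * B * C * zs \<alpha> (m - 1) * (v - t1) powr (2 * \<alpha>)"
          using rem unfolding tel pm by (simp add: F_def F1_def)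
        also have "\<dots> \<le> real CARD('h) * B * C * zs \<alpha> (m - 1) * r powr (2 * \<alpha>)"
          using B0 Cpos zs_nonneg[of \<alpha> "m - 1"] a vt1 apos
          by (intro mult_left_mono powr_mono2) (auto simp: r_def t1_def)
        also have "\<dots> = 2 * (real CARD('h) * real CARD('d) * ndf * C) * zs \<alpha> (m - 1) * r powr \<alpha> * Q"
          unfolding powr2[OF r0] by (simp add: B_def Q_def algebra_simps)
        finally show ?thesis .
      qed
      have E2: "vabs ((F0 - F1) *v (X t1 - X u)) \<le> (real CARD('h) * real CARD('d) * ndf * C) * r powr \<alpha> * Q"
      proof -
        have st: "vabs (e (Suc a) - e a) \<le> real CARD('h) * nf * (C * (1 / 2 ^ n) powr \<alpha>)"
        proof -
          have "vabs (e (Suc a) - e a) \<le> real CARD('h) * nf * vabs (x (grid n (Suc a)) - x (grid n a))"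
            using fv_bound by simp
          also have "vabs (x (grid n (Suc a)) - x (grid n a)) \<le> C * (1 / 2 ^ n) powr \<alpha>"
            using x_grid[of "Suc a" a] al by (simp add: grid_Suc)
          finally show ?thesis using nf_nonneg by (simp add: mult_left_mono)
        qed
        have gr: "(1 / 2 ^ n) powr \<alpha> \<le> r powr \<alpha>" using g_r apos by (intro powr_mono2) auto
        have t1u: "vabs (X t1 - X u) \<le> C * r powr \<alpha>"
        proof -
          have "vabs (X t1 - X u) \<le> C * (t1 - u) powr \<alpha>"
            using Xh[of u t1] a assms grid_le1[of "Suc a" n] al by (simp add: t1_def)
          also have "\<dots> \<le> C * r powr \<alpha>"
            using a g_r Cpos apos by (intro mult_left_mono powr_mono2) (auto simp: t1_def grid_Suc)
          finally show ?thesis .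
        qed
        have "vabs ((F0 - F1) *v (X t1 - X u)) \<le> real CARD('h) * mabs (F0 - F1) * vabs (X t1 - X u)"
          by (rule mabs_mult)
        also have "\<dots> \<le> real CARD('h) * (real CARD('d) * ndf * (real CARD('h) * nf * (C * r powr \<alpha>))) * (C * r powr \<alpha>)"
        proof (intro mult_mono mult_left_mono)
          have "mabs (F0 - F1) \<le> real CARD('d) * ndf * vabs (e a - e (Suc a))"
            unfolding F0_def F1_def by (rule flip)
          also have "\<dots> \<le> real CARD('d) * ndf * (real CARD('h) * nf * (C * r powr \<alpha>))"
          proof -
            have "real CARD('h) * nf * (C * (1 / 2 ^ n) powr \<alpha>) \<le> real CARD('h) * nf * (C * r powr \<alpha>)"
              using gr nf_nonneg Cpos by (intro mult_left_mono) auto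
            then have "vabs (e a - e (Suc a)) \<le> real CARD('h) * nf * (C * r powr \<alpha>)"
              using st vabs_commute[of "e a" "e (Suc a)"] by linarith
            then show ?thesis using ndfpos by (intro mult_left_mono) auto
          qed
          finally show "mabs (F0 - F1) \<le> real CARD('d) * ndf * (real CARD('h) * nf * (C * r powr \<alpha>))" .
        qed (use t1u ndfpos nf_nonneg Cpos mabs_nonneg vabs_nonneg in auto)
        also have "\<dots> = (real CARD('h) * real CARD('d) * ndf * C) * r powr \<alpha> * Q"
          by (simp add: Q_def algebra_simps)
        finally show ?thesis .
      qed
      have sm: "(real CARD('h) * real CARD('d) * ndf * C) * r powr \<alpha> * (1 + 2 * zs \<alpha> (m - 1)) \<le> 1"
      proof -
        have "(real CARD('h) * real CARD('d) * ndf * C) * r powr \<alpha> * (1 + 2 * zs \<alpha> (m - 1))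
            \<le> (real CARD('h) * real CARD('d) * ndf * C) * r powr \<alpha> * (2 * K)"
          using zs_K[of "m - 1"] K_pos c2_nonneg by (intro mult_left_mono) auto
        also have "\<dots> = 2 * (real CARD('h) * real CARD('d) * ndf * C) * K * r powr \<alpha>" by simp
        also have "\<dots> \<le> 1" using key[of r] r0 assms by (simp add: r_def)
        finally show ?thesis .
      qed
      have "vabs (z v - z u) \<le> vabs ((z v - z t1) - F1 *v (X v - X t1)) + vabs (F1 *v (X v - X u)) + vabs ((F0 - F1) *v (X t1 - X u))"
        unfolding dec by (meson add_mono order_trans vabs_add order_refl)
      also have "\<dots> \<le> 2 * (real CARD('h) * real CARD('d) * ndf * C) * zs \<alpha> (m - 1) * r powr \<alpha> * Q + Q
          + (real CARD('h) * real CARD('d) * ndf * C) * r powr \<alpha> * Q"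
        using E1 E2 FX[of "e (Suc a)"] by (simp add: F1_def)
      also have "\<dots> = Q + ((real CARD('h) * real CARD('d) * ndf * C) * r powr \<alpha> * (1 + 2 * zs \<alpha> (m - 1))) * Q"
        by (simp add: algebra_simps)
      also have "\<dots> \<le> Q + 1 * Q" using sm Q0 by (intro add_left_mono mult_right_mono) auto
      finally show ?thesis .
    qed
  qed
  then show ?thesis by (simp add: Q_def r_def algebra_simps)
qed

end

context eul begin

lemma euler_hoelder:
  assumes "i < j" "j \<le> 2 ^ n"
  shows "vabs (e j - e i) \<le> 2 * real CARD('h) * real N powr (1 - \<alpha>) * nf * C * (grid n j - grid n i) powr \<alpha>"
proof -
  define r where "r = grid n j - grid n i"
  define s where "s = grid n i"
  have r0: "0 < r" using assms by (simp add: r_def grid_less_iff)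
  have r1: "r \<le> 1" using grid_le1[of j n] grid_nonneg[of n i] assms by (simp add: r_def)
  have Npos: "0 < real N" using N1 by simp
  have N1a: "1 \<le> real N powr (1 - \<alpha>)" using N1 alpha by (intro ge_one_powr_ge_zero) auto
  define A where "A = 2 * real CARD('h) * nf * C"
  have A0: "0 \<le> A" using nf_nonneg Cpos by (simp add: A_def)
  have "vabs (e j - e i) \<le> A * real N powr (1 - \<alpha>) * r powr \<alpha>"
  proof (cases "r \<le> 1 / real N")
    case True
    have "vabs (e j - e i) \<le> A * r powr \<alpha>"
      using grid_local[of i j] assms True by (simp add: r_def A_def)
    also have "\<dots> \<le> A * real N powr (1 - \<alpha>) * r powr \<alpha>"
    proof -
      have "r powr \<alpha> \<le> real N powr (1 - \<alpha>) * r powr \<alpha>"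
        using N1a mult_right_mono[of 1 "real N powr (1 - \<alpha>)" "r powr \<alpha>"] by simp
      then show ?thesis using A0 by (simp add: mult_left_mono mult.assoc)
    qed
    finally show ?thesis .
  next
    case False
    define q where "q = nat \<lceil>r * real N\<rceil>"
    have rq: "r * real N \<le> real q" unfolding q_def by linarith
    have "1 < r * real N" using False Npos by (simp add: field_simps)
    then have "1 < real q" using rq by linarith
    then have q1: "1 \<le> q" by simp
    have qN: "q \<le> N"
    proof -
      have "r * real N \<le> real N" using r1 Npos mult_right_mono[of r 1 "real N"] by simp
      then show ?thesis unfolding q_def by simp
    qed
    have qpos: "0 < real q" using q1 by simp
    define pt where "pt l = s + real l * (r / real q)" for l
    have pt0: "pt 0 = grid n i" by (simp add: pt_def s_def)
    have ptq: "pt q = grid n j" using qpos by (simp add: pt_def s_def r_def)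
    have ptin: "0 \<le> pt l \<and> pt l \<le> 1" if "l \<le> q" for l
    proof -
      have "real l * (r / real q) \<le> real q * (r / real q)"
        using that r0 qpos by (intro mult_right_mono) auto
      then have "real l * (r / real q) \<le> r" using qpos by simp
      moreover have "0 \<le> real l * (r / real q)" using r0 qpos by simp
      ultimately show ?thesis using grid_nonneg[of n i] grid_le1[of j n] assms
        by (simp add: pt_def s_def r_def)
    qed
    have step: "vabs (z (pt (Suc l)) - z (pt l)) \<le> A * (r / real q) powr \<alpha>" if "l < q" for l
    proof -
      have d: "pt (Suc l) - pt l = r / real q" by (simp add: pt_def algebra_simps add_divide_distrib)
      have "r / real q \<le> 1 / real N" using rq Npos qpos by (simp add: field_simps)
      moreover have "0 < r / real q" using r0 qpos by simp
      ultimately show ?thesis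
        using gen_local[of "pt l" "pt (Suc l)"] ptin[of l] ptin[of "Suc l"] that d
        by (simp add: A_def)
    qed
    have "e j - e i = z (pt q) - z (pt 0)" unfolding ptq pt0 by (simp add: interp_grid)
    also have "\<dots> = (\<Sum>l<q. z (pt (Suc l)) - z (pt l))" by (rule sum_lessThan_telescope[symmetric])
    finally have "vabs (e j - e i) \<le> (\<Sum>l<q. vabs (z (pt (Suc l)) - z (pt l)))"
      using vabs_sum[of "{..<q}"] by simp
    also have "\<dots> \<le> (\<Sum>l<q. A * (r / real q) powr \<alpha>)" by (intro sum_mono step) auto
    also have "\<dots> = A * (real q * (r / real q) powr \<alpha>)" by simp
    also have "real q * (r / real q) powr \<alpha> = real q powr (1 - \<alpha>) * r powr \<alpha>"
      using qpos r0 by (simp add: powr_divide powr_diff)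
    also have "A * (real q powr (1 - \<alpha>) * r powr \<alpha>) \<le> A * (real N powr (1 - \<alpha>) * r powr \<alpha>)"
      using qN alpha A0 qpos by (intro mult_left_mono mult_right_mono powr_mono2) auto
    finally show ?thesis by (simp add: mult.assoc)
  qed
  then show ?thesis by (simp add: A_def r_def algebra_simps)
qed

end

lemma Hgrid_set_eq:
  "{nm (u i - u j) / \<bar>grid n i - grid n j\<bar> powr \<alpha> | i j. i < j \<and> j \<le> 2 ^ n}
   = (\<lambda>(i, j). nm (u i - u j) / \<bar>grid n i - grid n j\<bar> powr \<alpha>) ` {(i, j). i < j \<and> j \<le> (2::nat) ^ n}"
  by auto

lemma Hgrid_fin: "finite {nm (u i - u j) / \<bar>grid n i - grid n j\<bar> powr \<alpha> | i j. i < j \<and> j \<le> 2 ^ n}"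
proof -
  have "{(i, j). i < j \<and> j \<le> (2::nat) ^ n} \<subseteq> {..2 ^ n} \<times> {..2 ^ n}" by auto
  then have "finite {(i, j). i < j \<and> j \<le> (2::nat) ^ n}" by (rule finite_subset) auto
  then show ?thesis unfolding Hgrid_set_eq by simp
qed

lemma Hgrid_ge:
  assumes "i < j" "j \<le> 2 ^ n"
  shows "nm (u i - u j) / \<bar>grid n i - grid n j\<bar> powr \<alpha> \<le> Hgrid nm n \<alpha> u"
  unfolding Hgrid_def using assms by (intro Max_ge[OF Hgrid_fin]) blast

lemma Hgrid_le:
  assumes "\<And>i j. i < j \<Longrightarrow> j \<le> 2 ^ n \<Longrightarrow> nm (u i - u j) / \<bar>grid n i - grid n j\<bar> powr \<alpha> \<le> c"
  shows "Hgrid nm n \<alpha> u \<le> c"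
  unfolding Hgrid_def
proof (subst Max_le_iff[OF Hgrid_fin])
  show "{nm (u i - u j) / \<bar>grid n i - grid n j\<bar> powr \<alpha> | i j. i < j \<and> j \<le> 2 ^ n} \<noteq> {}"
  proof -
    have "(0::nat) < 1 \<and> (1::nat) \<le> 2 ^ n" by simp
    then show ?thesis by blast
  qed
qed (use assms in auto)

theorem lemma11:
  fixes x :: "real \<Rightarrow> real^'h::finite"
    and f :: "real^'d::finite \<Rightarrow> real^'h^'d"
    and Df :: "'d \<Rightarrow> 'h \<Rightarrow> real^'d \<Rightarrow> real^'d"
    and D2f :: "'d \<Rightarrow> 'h \<Rightarrow> real^'d \<Rightarrow> real^'d^'d"
    and y :: "real \<Rightarrow> real^'d"
    and y0 :: "real^'d"
    and \<alpha> C :: real and n :: nat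
  assumes alpha: "1/2 < \<alpha>" "\<alpha> \<le> 1"
    and C_pos: "0 < C"
    and x_hoelder: "\<And>s t. s \<in> {0..1} \<Longrightarrow> t \<in> {0..1} \<Longrightarrow> vabs (x t - x s) \<le> C * \<bar>t - s\<bar> powr \<alpha>"
    and Df: "\<And>i j z. ((\<lambda>w. f w $ i $ j) has_derivative (\<lambda>v. Df i j z \<bullet> v)) (at z)"
    and D2f: "\<And>i j z. (Df i j has_derivative (\<lambda>v. D2f i j z *v v)) (at z)"
    and D2f_cont: "\<And>i j. continuous_on UNIV (D2f i j)"
    and f_bdd: "bdd_above {\<bar>f z $ i $ j\<bar> | z i j. True}"
    and Df_bdd: "bdd_above {\<bar>Df i j z $ k\<bar> | i j z k. True}"
    and D2f_bdd: "bdd_above {\<bar>D2f i j z $ k $ l\<bar> | i j z k l. True}"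
    and y_sol: "\<And>t. t \<in> {0..1} \<Longrightarrow> young_has_integral (\<lambda>s. f (y s)) x 0 t (y t - y0)"
  defines "d \<equiv> real CARD('d)" and "h \<equiv> real CARD('h)"
    and "nf \<equiv> supF f" and "ndf \<equiv> supDF Df" and "nd2f \<equiv> supD2F D2f"
  defines "K \<equiv> 1 + (\<Sum>m. 1 / real (Suc m) powr (2 * \<alpha>))"
  defines "G1s \<equiv> 2 * h * (of_int \<lceil>(2 * d * h * C * K * ndf) powr (1 / \<alpha>)\<rceil>) powr (1 - \<alpha>) * nf * C"
  defines "L \<equiv> 4 / (1 - 2 powr (1 - 2 * \<alpha>)) * (h * C)\<^sup>2 * ndf * nf"
  defines "\<omega> \<equiv> (h * nf * C / L) powr (1 / \<alpha>)"
  defines "G1 \<equiv> (L + h * nf * C) * (1 + 1 / \<omega>)"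
  shows "Hgrid mabs n \<alpha> (\<lambda>k. f (y (grid n k)) - f (euler f x y0 n k))
     \<le> (d * ndf + d\<^sup>2 * nd2f * (G1s + G1)) * Hgrid vabs n \<alpha> (\<lambda>k. y (grid n k) - euler f x y0 n k)
       + d\<^sup>2 * nd2f * (G1s + G1) * vabs (y 0 - euler f x y0 n 0)"
proof -
  have nf_b: "\<bar>f z $ i $ j\<bar> \<le> nf" for z i j
    unfolding nf_def supF_def by (rule cSup_upper[OF _ f_bdd]) blast
  have ndf_b: "\<bar>Df i j z $ k\<bar> \<le> ndf" for z i j k
    unfolding ndf_def supDF_def by (rule cSup_upper[OF _ Df_bdd]) blast
  have nd2f_b: "\<bar>D2f i j z $ k $ l\<bar> \<le> nd2f" for z i j k l
    unfolding nd2f_def supD2F_def by (rule cSup_upper[OF _ D2f_bdd]) blast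
  have nf0: "0 \<le> nf" using nf_b[of undefined undefined undefined] by linarith
  have ndf0: "0 \<le> ndf" using ndf_b[of undefined undefined undefined undefined] by linarith
  have nd2f0: "0 \<le> nd2f" using nd2f_b[of undefined undefined undefined undefined undefined] by linarith
  have lip: "\<bar>f a $ i $ j - f b $ i $ j\<bar> \<le> d * ndf * vabs (a - b)" for a b i j
    unfolding d_def by (rule lip_grad[of "\<lambda>w. f w $ i $ j" "Df i j"]) (use Df ndf_b in auto)
  have apos: "0 < \<alpha>" using alpha by simp
  have h0: "0 \<le> h" by (simp add: h_def)
  have d0: "0 \<le> d" by (simp add: d_def)
  have G1s0: "0 \<le> G1s" unfolding G1s_def using h0 nf0 C_pos by simp
  have L0: "0 \<le> L"
  proof -
    have "2 powr (1 - 2 * \<alpha>) < 1" using alpha by (intro powr_less_one) auto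
    then show ?thesis unfolding L_def using ndf0 nf0 by simp
  qed
  have G10: "0 \<le> G1" unfolding G1_def \<omega>_def using L0 h0 nf0 C_pos by simp
  define U where "U k = y (grid n k) - euler f x y0 n k" for k
  define W where "W k = f (y (grid n k)) - f (euler f x y0 n k)" for k
  define Hv where "Hv = Hgrid vabs n \<alpha> U"
  have g0: "grid n 0 = 0" by (simp add: grid_def)
  have Hv_b: "vabs (U i - U j) \<le> Hv * (grid n j - grid n i) powr \<alpha>" if "i < j" "j \<le> 2 ^ n" for i j
  proof -
    have "vabs (U i - U j) / \<bar>grid n i - grid n j\<bar> powr \<alpha> \<le> Hv"
      unfolding Hv_def by (rule Hgrid_ge[OF that])
    moreover have "\<bar>grid n i - grid n j\<bar> = grid n j - grid n i" using that by (simp add: grid_le_iff)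
    moreover have "0 < (grid n j - grid n i) powr \<alpha>" using that grid_less_iff[of n i j] by simp
    ultimately show ?thesis by (simp add: divide_le_eq)
  qed
  have Hv0: "0 \<le> Hv"
  proof -
    have "vabs (U 0 - U 1) / \<bar>grid n 0 - grid n 1\<bar> powr \<alpha> \<le> Hv"
      unfolding Hv_def by (rule Hgrid_ge) auto
    moreover have "0 \<le> vabs (U 0 - U 1) / \<bar>grid n 0 - grid n 1\<bar> powr \<alpha>" by (simp add: vabs_nonneg)
    ultimately show ?thesis by linarith
  qed
  define M where "M = vabs (U 0) + Hv"
  have UM: "vabs (U k) \<le> M" if "k \<le> 2 ^ n" for k
  proof (cases "k = 0")
    case True then show ?thesis using Hv0 by (simp add: M_def)
  next
    case False
    have "vabs (U k) = vabs (U 0 - (U 0 - U k))" by simp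
    also have "\<dots> \<le> vabs (U 0) + vabs (U 0 - U k)" by (rule vabs_diff)
    also have "vabs (U 0 - U k) \<le> Hv * (grid n k - grid n 0) powr \<alpha>" using Hv_b[of 0 k] that False by simp
    also have "\<dots> \<le> Hv * 1"
    proof (intro mult_left_mono Hv0)
      have "(grid n k - grid n 0) powr \<alpha> \<le> 1 powr \<alpha>"
        using grid_le1[OF that] apos by (intro powr_mono2) (auto simp: g0 grid_nonneg)
      then show "(grid n k - grid n 0) powr \<alpha> \<le> 1" by simp
    qed
    finally show ?thesis by (simp add: M_def)
  qed
  have RHS0: "0 \<le> (d * ndf + d\<^sup>2 * nd2f * (G1s + G1)) * Hv + d\<^sup>2 * nd2f * (G1s + G1) * vabs (U 0)"
    using d0 ndf0 nd2f0 G1s0 G10 Hv0 vabs_nonneg[of "U 0"]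
    by (intro add_nonneg_nonneg mult_nonneg_nonneg zero_le_power2) auto
  have main: "mabs (W i - W j) / \<bar>grid n i - grid n j\<bar> powr \<alpha>
      \<le> (d * ndf + d\<^sup>2 * nd2f * (G1s + G1)) * Hv + d\<^sup>2 * nd2f * (G1s + G1) * vabs (U 0)"
    if ij: "i < j" "j \<le> 2 ^ n" for i j
  proof (cases "ndf = 0")
    case True
    have "mabs (W i - W j) \<le> 0"
    proof (rule mabs_le)
      fix k l
      have "\<bar>f a $ k $ l - f b $ k $ l\<bar> \<le> 0" for a b using lip[where a=a and b=b and i=k and j=l] True by simp
      then have "f a $ k $ l = f b $ k $ l" for a b by simp
      then have c: "f a $ k $ l = f 0 $ k $ l" for a by blast
      have "(W i - W j) $ k $ l = f (y (grid n i)) $ k $ l - f (euler f x y0 n i) $ k $ l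
          - (f (y (grid n j)) $ k $ l - f (euler f x y0 n j) $ k $ l)"
        unfolding W_def by simp
      also have "\<dots> = 0"
        using c[of "y (grid n i)"] c[of "euler f x y0 n i"] c[of "y (grid n j)"] c[of "euler f x y0 n j"]
        by linarith
      finally show "\<bar>(W i - W j) $ k $ l\<bar> \<le> 0" by simp
    qed
    then have "mabs (W i - W j) / \<bar>grid n i - grid n j\<bar> powr \<alpha> \<le> 0"
      by (simp add: divide_nonpos_nonneg)
    then show ?thesis using RHS0 by linarith
  next
    case False
    then have ndfp: "0 < ndf" using ndf0 by simp
    define Y where "Y = 2 * d * h * C * K * ndf"
    have summ: "summable (\<lambda>m. 1 / real (Suc m) powr (2 * \<alpha>))"
    proof -
      have "summable (\<lambda>m. real m powr (- (2 * \<alpha>)))" using alpha by (subst summable_real_powr_iff) auto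
      then have "summable (\<lambda>m. real (Suc m) powr (- (2 * \<alpha>)))" by (subst summable_Suc_iff)
      then show ?thesis by (simp add: powr_minus_divide)
    qed
    have Kz: "1 + zs \<alpha> m \<le> K" for m
    proof -
      have "zs \<alpha> m = (\<Sum>k<m. 1 / real (Suc k) powr (2 * \<alpha>))"
        unfolding zs_def using sum.atLeast1_atMost_eq[of "\<lambda>j. 1 / real j powr (2 * \<alpha>)" m] by simp
      also have "\<dots> \<le> (\<Sum>m. 1 / real (Suc m) powr (2 * \<alpha>))"
        by (rule sum_le_suminf[OF summ]) auto
      finally show ?thesis by (simp add: K_def)
    qed
    have K1: "1 \<le> K" using Kz[of 0] by (simp add: zs_def)
    have Ypos: "0 < Y" unfolding Y_def using ndfp C_pos K1 by (simp add: d_def h_def)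
    define N where "N = nat \<lceil>Y powr (1 / \<alpha>)\<rceil>"
    have YN: "Y powr (1 / \<alpha>) \<le> real N" unfolding N_def by linarith
    have N1: "1 \<le> N"
    proof -
      have "0 < Y powr (1 / \<alpha>)" using Ypos by simp
      then have "0 < real N" using YN by linarith
      then show ?thesis by simp
    qed
    have NK: "Y \<le> real N powr \<alpha>"
    proof -
      have "(Y powr (1 / \<alpha>)) powr \<alpha> \<le> real N powr \<alpha>" using YN apos by (intro powr_mono2) auto
      moreover have "(Y powr (1 / \<alpha>)) powr \<alpha> = Y" using Ypos apos by (simp add: powr_powr)
      ultimately show ?thesis by simp
    qed
    have G1s_eq: "G1s = 2 * h * real N powr (1 - \<alpha>) * nf * C"
    proof -
      have "of_int \<lceil>(2 * d * h * C * K * ndf) powr (1 / \<alpha>)\<rceil> = real N"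
        unfolding N_def Y_def using Ypos[unfolded Y_def] by simp
      then show ?thesis unfolding G1s_def by simp
    qed
    interpret E: eul x f y0 n \<alpha> C nf ndf K N
    proof
      show "\<bar>f a $ i $ j - f b $ i $ j\<bar> \<le> real CARD('d) * ndf * vabs (a - b)" for a b i j
        using lip by (simp add: d_def)
      show "2 * (real CARD('h) * real CARD('d) * ndf * C) * K \<le> real N powr \<alpha>"
        using NK by (simp add: Y_def d_def h_def algebra_simps)
    qed (use alpha C_pos x_hoelder nf_b ndfp Kz N1 in auto)
    have EH: "vabs (euler f x y0 n j - euler f x y0 n i) \<le> G1s * (grid n j - grid n i) powr \<alpha>"
      using E.euler_hoelder[OF ij] by (simp add: G1s_eq h_def)
    define \<Delta> where "\<Delta> = (grid n j - grid n i) powr \<alpha>"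
    have Dpos: "0 < \<Delta>" using ij grid_less_iff[of n i j] by (simp add: \<Delta>_def)
    have ent: "\<bar>(W i - W j) $ k $ l\<bar> \<le> d * ndf * (Hv * \<Delta>) + d * (d * nd2f * M) * (G1s * \<Delta>)" for k l
    proof -
      let ?a = "y (grid n j)" and ?b = "euler f x y0 n j" and ?c = "y (grid n i)" and ?e = "euler f x y0 n i"
      have so: "\<bar>f ?a $ k $ l - f ?b $ k $ l - f ?c $ k $ l + f ?e $ k $ l\<bar>
          \<le> d * ndf * vabs ((?a - ?c) - (?b - ?e)) + d * (d * nd2f * M) * vabs (?b - ?e)"
        unfolding d_def
      proof (rule second_order[where G="Df k l" and Hs="D2f k l"])
        show "vabs (?c - ?e) \<le> M" using UM[of i] ij by (simp add: U_def)
        show "vabs (?a - ?b) \<le> M" using UM[of j] ij by (simp add: U_def)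
      qed (use Df D2f ndf_b nd2f_b in auto)
      have "(?a - ?c) - (?b - ?e) = U j - U i" by (simp add: U_def algebra_simps)
      then have v1: "vabs ((?a - ?c) - (?b - ?e)) \<le> Hv * \<Delta>"
        using Hv_b[OF ij] vabs_commute[of "U i" "U j"] by (simp add: \<Delta>_def)
      have v2: "vabs (?b - ?e) \<le> G1s * \<Delta>" using EH by (simp add: \<Delta>_def)
      have M0: "0 \<le> M" using Hv0 vabs_nonneg[of "U 0"] by (simp add: M_def)
      have "d * ndf * vabs ((?a - ?c) - (?b - ?e)) + d * (d * nd2f * M) * vabs (?b - ?e)
          \<le> d * ndf * (Hv * \<Delta>) + d * (d * nd2f * M) * (G1s * \<Delta>)"
        using v1 v2 d0 ndf0 nd2f0 M0 by (intro add_mono mult_left_mono) auto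
      moreover have "\<bar>(W i - W j) $ k $ l\<bar> = \<bar>f ?a $ k $ l - f ?b $ k $ l - f ?c $ k $ l + f ?e $ k $ l\<bar>"
        unfolding W_def by simp
      ultimately show ?thesis using so by linarith
    qed
    have "mabs (W i - W j) \<le> (d * ndf * Hv + d\<^sup>2 * nd2f * M * G1s) * \<Delta>"
      by (rule mabs_le) (use ent in \<open>simp add: power2_eq_square algebra_simps\<close>)
    moreover have "\<bar>grid n i - grid n j\<bar> powr \<alpha> = \<Delta>" using ij by (simp add: \<Delta>_def grid_le_iff)
    ultimately have "mabs (W i - W j) / \<bar>grid n i - grid n j\<bar> powr \<alpha> \<le> d * ndf * Hv + d\<^sup>2 * nd2f * M * G1s"
      using Dpos by (simp add: divide_le_eq)
    also have "\<dots> \<le> (d * ndf + d\<^sup>2 * nd2f * (G1s + G1)) * Hv + d\<^sup>2 * nd2f * (G1s + G1) * vabs (U 0)"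
    proof -
      have "0 \<le> d\<^sup>2 * nd2f * G1 * (Hv + vabs (U 0))"
        using nd2f0 G10 Hv0 vabs_nonneg[of "U 0"] by simp
      then show ?thesis by (simp add: M_def algebra_simps)
    qed
    finally show ?thesis .
  qed
  have "Hgrid mabs n \<alpha> W \<le> (d * ndf + d\<^sup>2 * nd2f * (G1s + G1)) * Hv + d\<^sup>2 * nd2f * (G1s + G1) * vabs (U 0)"
    by (rule Hgrid_le) (rule main)
  moreover have "W = (\<lambda>k. f (y (grid n k)) - f (euler f x y0 n k))" by (simp add: W_def fun_eq_iff)
  moreover have "U = (\<lambda>k. y (grid n k) - euler f x y0 n k)" by (simp add: U_def fun_eq_iff)
  ultimately show ?thesis by (simp add: Hv_def U_def g0)
qed

end
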